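(* Let $m\ge1$, $C_m$ cyclic with generator $c$, and consider the absolute Wedderburn embedding $\omega_{\mathbb{Z},m}\colon\mathbb{Z}C_m\to\prod_{d\mid m}\mathbb{Z}[\zeta_d]$, $c\mapsto(\zeta_d)_{d\mid m}$. Its index (the order of its cokernel) is \[ \prod_{p\mid m}p^{\frac{m[p]-1}{p-1}\cdot m[p']}, \] the product running over the primes $p$ dividing $m$.
   Context: $\zeta_d$ is a primitive $d$th root of unity. For a prime $p$, $m[p]:=p^{v_p(m)}$ is the $p$-part of $m$ and $m[p']:=m/m[p]$ its $p'$-part. *)

theory Defs
  imports Complex_Main "HOL-Computational_Algebra.Computational_Algebra"
begin

definition zeta :: "nat \<Rightarrow> complex" where
  "zeta d = cis (2 * pi / real d)"

definition int_cyclotomic_ring :: "nat \<Rightarrow> complex set" where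
  "int_cyclotomic_ring d = {poly (map_poly of_int p) (zeta d) | p :: int poly. True}"

text \<open>The product of Z[zeta_d] over d dividing m, as functions on indices d
  (zero outside the divisors of m).\<close>
definition wedderburn_target :: "nat \<Rightarrow> (nat \<Rightarrow> complex) set" where
  "wedderburn_target m = {f. (\<forall>d. d dvd m \<longrightarrow> f d \<in> int_cyclotomic_ring d)
                             \<and> (\<forall>d. \<not> d dvd m \<longrightarrow> f d = 0)}"

text \<open>The absolute Wedderburn map: the element sum_{k<m} a_k c^k of Z C_m
  (given by its coefficients a_0, ..., a_(m-1)) goes to (sum_k a_k zeta_d^k)_{d | m}.\<close>
definition wedderburn_map :: "nat \<Rightarrow> (nat \<Rightarrow> int) \<Rightarrow> nat \<Rightarrow> complex" where
  "wedderburn_map m a = (\<lambda>d. if d dvd m then (\<Sum>k<m. of_int (a k) * zeta d ^ k) else 0)"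

definition wedderburn_image :: "nat \<Rightarrow> (nat \<Rightarrow> complex) set" where
  "wedderburn_image m = range (wedderburn_map m)"

text \<open>Order of the cokernel: number of cosets x + image, x in the target.\<close>
definition wedderburn_index :: "nat \<Rightarrow> nat" where
  "wedderburn_index m =
     card ((\<lambda>x. (\<lambda>y. \<lambda>d. x d + y d) ` wedderburn_image m) ` wedderburn_target m)"

definition p_part :: "nat \<Rightarrow> nat \<Rightarrow> nat" where
  "p_part p m = p ^ multiplicity p m"

end

theory Submission
  imports Defs "HOL-Number_Theory.Totient" "HOL-Library.Function_Algebras"
begin

definition cset :: "'a::ab_group_add set \<Rightarrow> 'a \<Rightarrow> 'a set" where
  "cset C x = (\<lambda>y. x + y) ` C"

definition subgrp :: "'a::ab_group_add set \<Rightarrow> bool" where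
  "subgrp C \<longleftrightarrow> 0 \<in> C \<and> (\<forall>x\<in>C. \<forall>y\<in>C. x + y \<in> C \<and> x - y \<in> C)"

lemma subgrp_minus: "subgrp C \<Longrightarrow> x \<in> C \<Longrightarrow> -x \<in> C"
  unfolding subgrp_def by (metis diff_0)

lemma cset_eq_iff:
  assumes "subgrp C"
  shows "cset C x = cset C y \<longleftrightarrow> x - y \<in> C"
proof
  assume h: "cset C x = cset C y"
  have "x \<in> cset C x" using assms unfolding cset_def subgrp_def by force
  then obtain c where "c \<in> C" "x = y + c" using h unfolding cset_def by auto
  then show "x - y \<in> C" by simp
next
  assume h: "x - y \<in> C"
  show "cset C x = cset C y"
  proof
    show "cset C x \<subseteq> cset C y"
    proof
      fix z assume "z \<in> cset C x"
      then obtain c where c: "c \<in> C" "z = x + c" unfolding cset_def by auto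
      have "(x - y) + c \<in> C" using assms h c unfolding subgrp_def by auto
      moreover have "z = y + ((x - y) + c)" using c by simp
      ultimately show "z \<in> cset C y" unfolding cset_def by blast
    qed
  next
    show "cset C y \<subseteq> cset C x"
    proof
      fix z assume "z \<in> cset C y"
      then obtain c where c: "c \<in> C" "z = y + c" unfolding cset_def by auto
      have "c - (x - y) \<in> C" using assms h c unfolding subgrp_def by auto
      moreover have "z = x + (c - (x - y))" using c by simp
      ultimately show "z \<in> cset C x" unfolding cset_def by blast
    qed
  qed
qed

lemma card_image_eq_rel:
  assumes "\<And>u v. u \<in> P \<Longrightarrow> v \<in> P \<Longrightarrow> f u = f v \<longleftrightarrow> g u = g v"
  shows "card (f ` P) = card (g ` P)"
proof -
  define h where "h = (\<lambda>y. f (inv_into P g y))"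
  have "f ` P = h ` (g ` P)"
  proof -
    have "h (g u) = f u" if "u \<in> P" for u
    proof -
      have "inv_into P g (g u) \<in> P" using that by (simp add: inv_into_into)
      moreover have "g (inv_into P g (g u)) = g u" using that by (simp add: f_inv_into_f)
      ultimately show ?thesis unfolding h_def using assms that by blast
    qed
    then show ?thesis by (force simp: image_comp)
  qed
  moreover have "inj_on h (g ` P)"
  proof (rule inj_onI)
    fix a b assume a: "a \<in> g ` P" and b: "b \<in> g ` P" and e: "h a = h b"
    have ia: "inv_into P g a \<in> P" using a by (auto simp: inv_into_into)
    have ib: "inv_into P g b \<in> P" using b by (auto simp: inv_into_into)
    have "g (inv_into P g a) = g (inv_into P g b)"
      using assms[OF ia ib] e unfolding h_def by simp
    then show "a = b" using a b by (simp add: f_inv_into_f)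
  qed
  ultimately show ?thesis by (simp add: card_image)
qed

lemma card_cosets_via:
  fixes \<psi> :: "'p \<Rightarrow> 'a::ab_group_add"
  assumes "subgrp C" and "A = \<psi> ` P"
    and "\<And>u v. u \<in> P \<Longrightarrow> v \<in> P \<Longrightarrow> (\<psi> u - \<psi> v \<in> C) = (\<chi> u = \<chi> v)"
  shows "card (cset C ` A) = card (\<chi> ` P)"
proof -
  have "cset C ` A = (\<lambda>u. cset C (\<psi> u)) ` P" using assms(2) by auto
  moreover have "card ((\<lambda>u. cset C (\<psi> u)) ` P) = card (\<chi> ` P)"
    by (rule card_image_eq_rel) (simp add: cset_eq_iff[OF assms(1)] assms(3))
  ultimately show ?thesis by simp
qed

lemma cset_translate: "cset C (a + x) = (\<lambda>y. a + y) ` cset C x"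
  unfolding cset_def by (auto simp: image_image add.assoc)

lemma card_tower:
  fixes A B C :: "'a::ab_group_add set"
  assumes sA: "subgrp A" and sB: "subgrp B" and sC: "subgrp C"
    and CB: "C \<subseteq> B" and BA: "B \<subseteq> A"
    and f1: "finite (cset B ` A)" and f2: "finite (cset C ` B)"
  shows "card (cset C ` A) = card (cset B ` A) * card (cset C ` B)"
proof -
  define piece where "piece Y = cset C ` Y" for Y
  have cover: "cset C ` A = (\<Union>Y\<in>cset B ` A. piece Y)"
  proof
    show "cset C ` A \<subseteq> (\<Union>Y\<in>cset B ` A. piece Y)"
    proof
      fix Z assume "Z \<in> cset C ` A"
      then obtain x where x: "x \<in> A" "Z = cset C x" by auto
      have "x \<in> cset B x" using sB unfolding cset_def subgrp_def by force
      then show "Z \<in> (\<Union>Y\<in>cset B ` A. piece Y)" using x unfolding piece_def by blast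
    qed
  next
    show "(\<Union>Y\<in>cset B ` A. piece Y) \<subseteq> cset C ` A"
    proof
      fix Z assume "Z \<in> (\<Union>Y\<in>cset B ` A. piece Y)"
      then obtain a z where a: "a \<in> A" "z \<in> cset B a" "Z = cset C z" unfolding piece_def by auto
      then obtain b where "b \<in> B" "z = a + b" unfolding cset_def by auto
      then have "z \<in> A" using a BA sA unfolding subgrp_def by auto
      then show "Z \<in> cset C ` A" using a by auto
    qed
  qed
  have piece_card: "card (piece Y) = card (cset C ` B)" if YA: "Y \<in> cset B ` A" for Y
  proof -
    obtain a where a: "a \<in> A" "Y = cset B a" using YA by auto
    have "piece Y = (\<lambda>Z. (\<lambda>y. a + y) ` Z) ` (cset C ` B)"
      unfolding piece_def a(2) by (auto simp: cset_def image_image cset_translate[unfolded cset_def])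
    moreover have "inj_on (\<lambda>Z. (\<lambda>y. a + y) ` Z) (cset C ` B)"
    proof (rule inj_onI)
      fix U V :: "'a set" assume "(\<lambda>y. a + y) ` U = (\<lambda>y. a + y) ` V"
      then have "(\<lambda>y. -a + y) ` ((\<lambda>y. a + y) ` U) = (\<lambda>y. -a + y) ` ((\<lambda>y. a + y) ` V)" by simp
      then show "U = V" by (simp add: image_image)
    qed
    ultimately show ?thesis by (simp add: card_image)
  qed
  have disj: "piece Y1 \<inter> piece Y2 = {}" if YY: "Y1 \<in> cset B ` A" "Y2 \<in> cset B ` A" "Y1 \<noteq> Y2" for Y1 Y2
  proof (rule ccontr)
    assume "piece Y1 \<inter> piece Y2 \<noteq> {}"
    then obtain x y where xy: "x \<in> Y1" "y \<in> Y2" "cset C x = cset C y" unfolding piece_def by auto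
    obtain a1 where a1: "a1 \<in> A" "Y1 = cset B a1" using YY by auto
    obtain a2 where a2: "a2 \<in> A" "Y2 = cset B a2" using YY by auto
    have "x - y \<in> B" using xy(3) cset_eq_iff[OF sC] CB by auto
    have "Y1 = cset B x"
      using xy(1) a1(2) cset_eq_iff[OF sB, of x a1] unfolding cset_def by auto
    moreover have "Y2 = cset B y"
      using xy(2) a2(2) cset_eq_iff[OF sB, of y a2] unfolding cset_def by auto
    ultimately have "Y1 = Y2" using \<open>x - y \<in> B\<close> cset_eq_iff[OF sB] by simp
    then show False using YY by simp
  qed
  have fin_piece: "finite (piece Y)" if "Y \<in> cset B ` A" for Y
  proof -
    have "card (piece Y) = card (cset C ` B)" using piece_card that .
    show ?thesis
    proof (cases "cset C ` B = {}")
      case True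
      then have "B = {}" by simp
      then show ?thesis using sB unfolding subgrp_def by simp
    next
      case False
      then have "card (cset C ` B) > 0" using f2 by (simp add: card_gt_0_iff)
      then show ?thesis using piece_card[OF that] card_gt_0_iff by fastforce
    qed
  qed
  have "card (cset C ` A) = (\<Sum>Y\<in>cset B ` A. card (piece Y))"
    unfolding cover by (rule card_UN_disjoint[OF f1]) (use disj fin_piece in auto)
  also have "\<dots> = (\<Sum>Y\<in>cset B ` A. card (cset C ` B))" using piece_card by simp
  finally show ?thesis by simp
qed

definition ev :: "complex \<Rightarrow> int poly \<Rightarrow> complex" where
  "ev z g = poly (map_poly of_int g) z"

lemma mpi_add: "map_poly (of_int :: int \<Rightarrow> complex) (f + g) = map_poly of_int f + map_poly of_int g"
  by (rule poly_eqI) (simp add: coeff_map_poly)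
lemma mpi_diff: "map_poly (of_int :: int \<Rightarrow> complex) (f - g) = map_poly of_int f - map_poly of_int g"
  by (rule poly_eqI) (simp add: coeff_map_poly)
lemma mpi_uminus: "map_poly (of_int :: int \<Rightarrow> complex) (- f) = - map_poly of_int f"
  by (rule poly_eqI) (simp add: coeff_map_poly)
lemma mpi_mult: "map_poly (of_int :: int \<Rightarrow> complex) (f * g) = map_poly of_int f * map_poly of_int g"
  by (rule poly_eqI) (simp add: coeff_map_poly coeff_mult)
lemma mpi_smult: "map_poly (of_int :: int \<Rightarrow> complex) (smult c f) = smult (of_int c) (map_poly of_int f)"
  by (rule poly_eqI) (simp add: coeff_map_poly)
lemma mpi_const: "map_poly (of_int :: int \<Rightarrow> complex) [:c:] = [:of_int c:]"
  by (rule poly_eqI) (simp add: coeff_map_poly coeff_pCons split: nat.split)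
lemma mpi_monom: "map_poly (of_int :: int \<Rightarrow> complex) (monom c n) = monom (of_int c) n"
  by (simp add: map_poly_monom)
lemma mpi_pderiv: "map_poly (of_int :: int \<Rightarrow> complex) (pderiv f) = pderiv (map_poly of_int f)"
  by (rule poly_eqI) (simp add: coeff_map_poly coeff_pderiv)

lemma ev_add [simp]: "ev z (f + g) = ev z f + ev z g"
  unfolding ev_def by (simp add: mpi_add)
lemma ev_diff [simp]: "ev z (f - g) = ev z f - ev z g"
  unfolding ev_def by (simp add: mpi_diff)
lemma ev_uminus [simp]: "ev z (- f) = - ev z f"
  unfolding ev_def by (simp add: mpi_uminus)
lemma ev_mult [simp]: "ev z (f * g) = ev z f * ev z g"
  unfolding ev_def by (simp add: mpi_mult)
lemma ev_smult [simp]: "ev z (smult c f) = of_int c * ev z f"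
  unfolding ev_def by (simp add: mpi_smult)
lemma ev_const [simp]: "ev z [:c:] = of_int c"
  unfolding ev_def by (simp add: mpi_const)
lemma ev_0 [simp]: "ev z 0 = 0"
  unfolding ev_def by simp
lemma ev_1 [simp]: "ev z 1 = 1"
  unfolding ev_def by simp
lemma ev_monom [simp]: "ev z (monom c n) = of_int c * z ^ n"
  unfolding ev_def by (simp add: mpi_monom poly_monom)
lemma ev_power [simp]: "ev z (f ^ n) = ev z f ^ n"
  by (induction n) auto
lemma ev_prod: "ev z (\<Prod>i\<in>A. f i) = (\<Prod>i\<in>A. ev z (f i))"
  by (induction A rule: infinite_finite_induct) auto
lemma ev_pCons [simp]: "ev z (pCons a f) = of_int a + z * ev z f"
  unfolding ev_def by (simp add: map_poly_pCons)
lemma ev_pcompose: "ev z (pcompose f g) = ev (ev z g) f"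
  by (induction f) (auto simp: pcompose_pCons)
lemma ev_pderiv: "ev z (pderiv f) = poly (pderiv (map_poly of_int f)) z"
  unfolding ev_def by (simp add: mpi_pderiv)
lemma ev_dvd: "f dvd g \<Longrightarrow> ev z f = 0 \<Longrightarrow> ev z g = 0"
  by (auto elim!: dvdE)

lemma ev_of_nat [simp]: "ev z (of_nat n) = of_nat n"
  by (simp add: of_nat_poly)

lemma frob_add:
  fixes a b :: "'a::comm_ring_1"
  assumes p: "prime p"
  shows "\<exists>r. (a + b) ^ p = a ^ p + b ^ p + of_nat p * r"
proof -
  have p1: "p \<ge> 1" using p prime_ge_1_nat by blast
  define f where "f k = of_nat (p choose k) * a ^ k * b ^ (p - k)" for k
  define r where "r = (\<Sum>k\<in>{1..<p}. of_nat ((p choose k) div p) * a ^ k * b ^ (p - k))"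
  have "{..p} = insert 0 (insert p {1..<p})" using p1 by auto
  then have "(\<Sum>k\<le>p. f k) = f 0 + (f p + (\<Sum>k\<in>{1..<p}. f k))"
    using p1 by (simp only:) (subst sum.insert, simp, simp, subst sum.insert, auto)
  moreover have "(\<Sum>k\<in>{1..<p}. f k) = of_nat p * r"
  proof -
    have "f k = of_nat p * (of_nat ((p choose k) div p) * a ^ k * b ^ (p - k))" if "k \<in> {1..<p}" for k
    proof -
      have "p dvd (p choose k)" using that p by (intro dvd_choose_prime) auto
      then have "(p choose k) = p * ((p choose k) div p)" by simp
      then have "(of_nat (p choose k) :: 'a) = of_nat p * of_nat ((p choose k) div p)"
        by (metis of_nat_mult)
      then show ?thesis unfolding f_def by (simp add: mult.assoc)
    qed
    then show ?thesis unfolding r_def by (simp add: sum_distrib_left)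
  qed
  ultimately have "(\<Sum>k\<le>p. f k) = b ^ p + a ^ p + of_nat p * r" unfolding f_def by simp
  moreover have "(a + b) ^ p = (\<Sum>k\<le>p. f k)" unfolding f_def by (simp add: binomial_ring)
  ultimately show ?thesis by (metis add.commute)
qed

lemma fermat_nat_aux:
  assumes p: "prime p"
  shows "int p dvd int n ^ p - int n"
proof (induction n)
  case 0
  then show ?case using prime_gt_0_nat[OF p] by (simp add: zero_power)
next
  case (Suc n)
  obtain r where r: "(int n + 1) ^ p = int n ^ p + 1 ^ p + of_nat p * r"
    using frob_add[OF p, of "int n" 1] by blast
  have e: "int (Suc n) = int n + 1" by simp
  have "int (Suc n) ^ p - int (Suc n) = (int n + 1) ^ p - (int n + 1)" unfolding e ..
  also have "\<dots> = (int n ^ p + 1 ^ p + of_nat p * r) - (int n + 1)" by (simp only: r)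
  also have "\<dots> = (int n ^ p - int n) + int p * r" by simp
  finally have "int (Suc n) ^ p - int (Suc n) = (int n ^ p - int n) + int p * r" .
  then show ?case using Suc.IH by (metis dvd_add dvd_triv_left)
qed

lemma fermat_int:
  assumes p: "prime p"
  shows "int p dvd a ^ p - a"
proof -
  define r where "r = a mod int p"
  have r0: "0 \<le> r" using p unfolding r_def by (simp add: prime_gt_0_nat)
  have "int p dvd a - r" unfolding r_def by (simp add: minus_mod_eq_mult_div)
  then have d1: "int p dvd a ^ p - r ^ p" unfolding power_diff_sumr2[of a p r] by (rule dvd_mult2)
  have "int p dvd int (nat r) ^ p - int (nat r)" by (rule fermat_nat_aux[OF p])
  then have d2: "int p dvd r ^ p - r" using r0 by simp
  have "a ^ p - a = (a ^ p - r ^ p) + (r ^ p - r) - (a - r)" by simp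
  then show ?thesis using d1 d2 \<open>int p dvd a - r\<close> by (metis dvd_add dvd_diff)
qed

lemma frob:
  fixes f :: "int poly"
  assumes p: "prime p"
  shows "\<exists>r. f ^ p = pcompose f (monom 1 p) + smult (int p) r"
proof (induction f)
  case 0
  show ?case using prime_gt_0_nat[OF p] by (intro exI[of _ 0]) (simp add: zero_power)
next
  case (pCons a g)
  obtain r0 where r0: "g ^ p = pcompose g (monom 1 p) + smult (int p) r0" using pCons(2) by blast
  have e: "pCons a g = [:a:] + monom 1 1 * g"
    by (simp add: monom_Suc) 
  obtain r1' where r1': "([:a:] + monom 1 1 * g) ^ p = [:a:] ^ p + (monom 1 1 * g) ^ p + of_nat p * r1'"
    using frob_add[OF p] by blast
  define r1 where "r1 = r1'"
  have r1: "([:a:] + monom 1 1 * g) ^ p = [:a:] ^ p + (monom 1 1 * g) ^ p + smult (int p) r1"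
    using r1' unfolding r1_def by (simp add: of_nat_poly)
  obtain c where c: "a ^ p - a = int p * c" using fermat_int[OF p, of a] by (auto elim: dvdE)
  have "[:a:] ^ p = [:a ^ p:]" by (simp add: poly_const_pow)
  also have "\<dots> = [:a:] + smult (int p) [:c:]" using c by (simp add: algebra_simps) 
  finally have ca: "[:a:] ^ p = [:a:] + smult (int p) [:c:]" .
  have "(monom 1 1 * g) ^ p = monom 1 p * g ^ p" by (simp add: power_mult_distrib monom_power)
  have "pCons a g ^ p = [:a:] + monom 1 p * pcompose g (monom 1 p)
        + smult (int p) ([:c:] + monom 1 p * r0 + r1)"
    unfolding e r1 ca \<open>(monom 1 1 * g) ^ p = monom 1 p * g ^ p\<close> r0
    by (simp only: smult_add_right mult_smult_right distrib_left add_ac)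
  moreover have "pcompose (pCons a g) (monom 1 p) = [:a:] + monom 1 p * pcompose g (monom 1 p)"
    by (simp add: pcompose_pCons)
  ultimately show ?case by auto
qed

lemma smult_of_dvd_coeffs:
  fixes X :: "int poly"
  assumes "\<forall>i. q dvd coeff X i"
  shows "\<exists>r. X = smult q r"
proof -
  have "X = smult q (map_poly (\<lambda>c. c div q) X)"
    by (rule poly_eqI) (use assms in \<open>simp add: coeff_map_poly\<close>)
  then show ?thesis by blast
qed

lemma monic_mult_modq:
  fixes f X :: "int poly"
  assumes mon: "lead_coeff f = 1" and hyp: "\<forall>i\<ge>degree f. q dvd coeff (f * X) i"
  shows "\<forall>i. q dvd coeff X i"
proof (rule ccontr)
  assume "\<not> (\<forall>i. q dvd coeff X i)"
  define S where "S = {i. \<not> q dvd coeff X i}"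
  have Sne: "S \<noteq> {}" using \<open>\<not> _\<close> unfolding S_def by auto
  have Sfin: "finite S"
  proof (rule finite_subset[of _ "{..degree X}"])
    show "S \<subseteq> {..degree X}"
    proof
      fix i assume "i \<in> S"
      then have "coeff X i \<noteq> 0" unfolding S_def by auto
      then show "i \<in> {..degree X}" using coeff_eq_0[of X i] by (cases "i \<le> degree X") auto
    qed
  qed auto
  define j where "j = Max S"
  have jS: "j \<in> S" unfolding j_def using Sne Sfin by simp
  have above: "q dvd coeff X i" if ij: "i > j" for i
  proof (rule ccontr)
    assume "\<not> q dvd coeff X i"
    then have "i \<in> S" unfolding S_def by simp
    then have "i \<le> j" unfolding j_def using Sfin by simp
    then show False using ij by simp
  qed
  define n where "n = degree f + j"
  have "coeff (f * X) n = (\<Sum>i\<le>n. coeff f i * coeff X (n - i))" by (rule coeff_mult)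
  also have "\<dots> = coeff f (degree f) * coeff X (n - degree f) + (\<Sum>i\<in>{..n} - {degree f}. coeff f i * coeff X (n - i))"
    by (rule sum.remove) (auto simp: n_def)
  finally have eq: "coeff (f * X) n = coeff X j + (\<Sum>i\<in>{..n} - {degree f}. coeff f i * coeff X (n - i))"
    using mon by (simp add: n_def)
  have "q dvd (\<Sum>i\<in>{..n} - {degree f}. coeff f i * coeff X (n - i))"
  proof (rule dvd_sum)
    fix i assume i: "i \<in> {..n} - {degree f}"
    show "q dvd coeff f i * coeff X (n - i)"
    proof (cases "i < degree f")
      case True
      then have "n - i > j" unfolding n_def by simp
      then show ?thesis using above by simp
    next
      case False
      then have "i > degree f" using i by simp
      then show ?thesis by (simp add: coeff_eq_0)
    qed
  qed
  moreover have "q dvd coeff (f * X) n" using hyp unfolding n_def by simp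
  ultimately have "q dvd coeff X j + (\<Sum>i\<in>{..n} - {degree f}. coeff f i * coeff X (n - i))"
    using eq by simp
  then have "q dvd coeff X j" using \<open>q dvd (\<Sum>i\<in>{..n} - {degree f}. _)\<close> by (simp add: dvd_add_left_iff)
  then show False using jS unfolding S_def by simp
qed

lemma zeta_pow: "zeta d ^ k = cis (2 * pi * real k / real d)"
  unfolding zeta_def DeMoivre by (rule arg_cong[where f=cis]) (simp add: field_simps)

lemma zeta_pow_eq_1:
  assumes d: "d > 0"
  shows "zeta d ^ k = 1 \<longleftrightarrow> d dvd k"
proof
  assume h: "zeta d ^ k = 1"
  then have "Re (cis (2 * pi * real k / real d)) = 1"
    unfolding zeta_pow by simp
  then have "cos (2 * pi * real k / real d) = 1" by simp
  then obtain n :: int where n: "2 * pi * real k / real d = real_of_int n * 2 * pi"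
    using cos_one_2pi_int by blast
  then have "real k = real_of_int n * real d" using d by (simp add: field_simps)
  then have "int k = n * int d" by (metis of_int_eq_iff of_int_mult of_int_of_nat_eq)
  then have "int d dvd int k" by simp
  then show "d dvd k" by simp
next
  assume "d dvd k"
  then obtain t where t: "k = d * t" by auto
  have "2 * pi * real k / real d = 2 * pi * real t" using d t by (simp add: field_simps)
  then show "zeta d ^ k = 1" unfolding zeta_pow by simp
qed

lemma zeta_nonzero [simp]: "zeta d \<noteq> 0"
  unfolding zeta_def by (metis cis_neq_zero)

lemma zeta_pow_eq:
  assumes d: "d > 0"
  shows "zeta d ^ i = zeta d ^ j \<longleftrightarrow> i mod d = j mod d"
proof -
  have *: "zeta d ^ i = zeta d ^ j \<longleftrightarrow> i mod d = j mod d" if ij: "i \<le> j" for i j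
  proof -
    have "zeta d ^ j = zeta d ^ i * zeta d ^ (j - i)" using ij by (simp add: power_add[symmetric])
    then have "zeta d ^ i = zeta d ^ j \<longleftrightarrow> zeta d ^ (j - i) = 1" by auto
    also have "\<dots> \<longleftrightarrow> d dvd j - i" using zeta_pow_eq_1[OF d] by simp
    also have "\<dots> \<longleftrightarrow> i mod d = j mod d" using mod_eq_dvd_iff_nat[OF ij, of d] by auto
    finally show ?thesis .
  qed
  show ?thesis
  proof (cases "i \<le> j")
    case True then show ?thesis using * by simp
  next
    case False then show ?thesis using *[of j i] by auto
  qed
qed

lemma zeta_mult_pow:
  assumes "a > 0" "b > 0"
  shows "zeta (a * b) ^ a = zeta b"
  unfolding zeta_pow using assms by (simp add: zeta_def field_simps)

lemma zeta_pow_self: "d > 0 \<Longrightarrow> zeta d ^ d = 1"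
  using zeta_pow_eq_1 by simp

definition Xp :: "nat \<Rightarrow> int poly" where "Xp d = monom 1 d - 1"

lemma ev_Xp [simp]: "ev z (Xp d) = z ^ d - 1"
  unfolding Xp_def by simp

lemma degree_Xp: 
  assumes "d > 0" shows "degree (Xp d) = d"
proof -
  have c: "coeff (Xp d) d = 1" unfolding Xp_def using assms by (simp add: coeff_diff)
  have "degree (Xp d) \<le> d" unfolding Xp_def
    by (rule degree_diff_le) (simp_all add: degree_monom_le)
  moreover have "d \<le> degree (Xp d)" by (rule le_degree) (simp add: c)
  ultimately show ?thesis by simp
qed

lemma lc_Xp: 
  assumes "d > 0" shows "lead_coeff (Xp d) = 1"
proof -
  have "coeff (Xp d) d = 1" unfolding Xp_def using assms by (simp add: coeff_diff)
  then show ?thesis using degree_Xp[OF assms] by simp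
qed

lemma Xp_nonzero: 
  assumes "d > 0" shows "Xp d \<noteq> 0"
proof
  assume "Xp d = 0"
  then have "lead_coeff (Xp d) = 0" by simp
  then show False using lc_Xp[OF assms] by simp
qed

lemma exists_prime_root:
  fixes g :: "int poly"
  shows "g \<noteq> 0 \<Longrightarrow> ev z g = 0 \<Longrightarrow> \<exists>\<mu>. prime \<mu> \<and> \<mu> dvd g \<and> ev z \<mu> = 0"
proof (induction g rule: prime_divisors_induct)
  case zero
  then show ?case by simp
next
  case (unit x)
  then obtain c where c: "x = [:c:]" "c dvd 1" by (auto simp: is_unit_poly_iff)
  then have "c \<noteq> 0" by auto
  then show ?case using unit c by simp
next
  case (factor p x)
  show ?case
  proof (cases "ev z p = 0")
    case True
    then show ?thesis using factor by auto
  next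
    case False
    then have "ev z x = 0" using factor by simp
    moreover have "x \<noteq> 0" using factor by auto
    ultimately obtain \<mu> where m: "prime \<mu>" "\<mu> dvd x" "ev z \<mu> = 0" using factor by blast
    have "\<mu> dvd p * x" using m(2) by (rule dvd_mult)
    then show ?thesis using m by blast
  qed
qed

lemma prime_elem_degree:
  fixes \<mu> :: "int poly"
  assumes "prime_elem \<mu>" "lead_coeff \<mu> = 1"
  shows "degree \<mu> \<ge> 1"
proof (rule ccontr)
  assume "\<not> degree \<mu> \<ge> 1"
  then have "degree \<mu> = 0" by simp
  then have "\<mu> = [:lead_coeff \<mu>:]" using degree_0_id[of \<mu>] by simp
  then have "\<mu> = 1" using assms by (simp add: one_pCons)
  then show False using assms prime_elem_not_unit by auto
qed

lemma exists_monic_root: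
  assumes d: "d > 0" and w: "w ^ d = 1"
  shows "\<exists>\<mu>. prime_elem \<mu> \<and> lead_coeff \<mu> = 1 \<and> \<mu> dvd Xp d \<and> ev w \<mu> = 0"
proof -
  obtain \<mu> where mu: "prime \<mu>" "\<mu> dvd Xp d" "ev w \<mu> = 0"
    using exists_prime_root[OF Xp_nonzero[OF d], of w] w by auto
  obtain s where s: "Xp d = \<mu> * s" using mu by (auto elim: dvdE)
  have "lead_coeff (Xp d) = lead_coeff \<mu> * lead_coeff s" unfolding s by (rule lead_coeff_mult)
  then have "lead_coeff \<mu> * lead_coeff s = 1" using lc_Xp[OF d] by simp
  then have "lead_coeff \<mu> = 1 \<or> lead_coeff \<mu> = -1" using zmult_eq_1_iff by blast
  then show ?thesis
  proof
    assume "lead_coeff \<mu> = 1"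
    then show ?thesis using mu by (auto intro: prime_imp_prime_elem)
  next
    assume l: "lead_coeff \<mu> = -1"
    have "prime_elem ((-1) * \<mu>)" using prime_imp_prime_elem[OF mu(1)]
      by (subst prime_elem_mult_unit_left) auto
    then have "prime_elem (-\<mu>)" by simp
    moreover have "lead_coeff (-\<mu>) = 1" using l by simp
    moreover have "-\<mu> dvd Xp d" using mu by simp
    moreover have "ev w (-\<mu>) = 0" using mu by simp
    ultimately show ?thesis by blast
  qed
qed

lemma pseudo_div_exists:
  fixes g h :: "int poly"
  assumes "h \<noteq> 0"
  shows "\<exists>c q r. c \<noteq> 0 \<and> smult c g = h * q + r \<and> (r = 0 \<or> degree r < degree h)"
proof -
  obtain a q where aq: "a \<noteq> 0" "smult a g = h * q + pseudo_mod g h" using pseudo_mod(1)[OF assms, of g] by blast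
  show ?thesis
    by (rule exI[of _ a], rule exI[of _ q], rule exI[of _ "pseudo_mod g h"]) (use aq pseudo_mod(2)[OF assms, of g] in simp)
qed

lemma prime_root_dvd:
  fixes \<mu> g :: "int poly"
  assumes mu: "prime_elem \<mu>" "ev z \<mu> = 0" and g: "ev z g = 0"
  shows "\<mu> dvd g"
proof -
  define S where "S = {h :: int poly. h \<noteq> 0 \<and> ev z h = 0}"
  have muS: "\<mu> \<in> S" using mu unfolding S_def by auto
  define n where "n = (LEAST n. \<exists>h\<in>S. degree h = n)"
  have ex: "\<exists>m. \<exists>h\<in>S. degree h = m" using muS by blast
  have "\<exists>h\<in>S. degree h = n" unfolding n_def by (rule LeastI_ex[OF ex])
  then obtain h where hS: "h \<in> S" and hn: "degree h = n" by blast
  have hmin: "degree h \<le> degree h'" if h'S: "h' \<in> S" for h'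
  proof -
    have "\<exists>h\<in>S. degree h = degree h'" using h'S by blast
    then have "n \<le> degree h'" unfolding n_def by (rule Least_le)
    then show ?thesis using hn by simp
  qed
  have key: "\<exists>c q. c \<noteq> 0 \<and> smult c f = h * q" if "ev z f = 0" for f
  proof -
    have h0: "h \<noteq> 0" using hS unfolding S_def by auto
    obtain c q r where cqr: "c \<noteq> 0" "smult c f = h * q + r" "r = 0 \<or> degree r < degree h"
      using pseudo_div_exists[OF h0, of f] by blast
    have "r = smult c f - h * q" using cqr(2) by (simp add: algebra_simps)
    then have "ev z r = 0" using that hS unfolding S_def by simp
    have "r = 0"
    proof (rule ccontr)
      assume "r \<noteq> 0"
      then have "r \<in> S" using \<open>ev z r = 0\<close> unfolding S_def by simp
      then have "degree h \<le> degree r" by (rule hmin)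
      then show False using cqr(3) \<open>r \<noteq> 0\<close> by simp
    qed
    then show ?thesis using cqr by auto
  qed
  obtain c s where cs: "c \<noteq> 0" "smult c \<mu> = h * s" using key[OF mu(2)] by blast
  obtain c' q' where cq: "c' \<noteq> 0" "smult c' g = h * q'" using key[OF g] by blast
  have nc: "\<not> \<mu> dvd [:a:]" if "a \<noteq> 0" for a
  proof
    assume "\<mu> dvd [:a:]"
    then have "degree \<mu> = 0" using that dvd_imp_degree_le[of \<mu> "[:a:]"] by simp
    then have "\<mu> = [:coeff \<mu> 0:]" using degree_0_id[of \<mu>] by simp
    then have "ev z \<mu> = of_int (coeff \<mu> 0)" using ev_const[of z "coeff \<mu> 0"] by simp
    moreover have "coeff \<mu> 0 \<noteq> 0"
    proof
      assume "coeff \<mu> 0 = 0"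
      then have "\<mu> = 0" using \<open>\<mu> = [:coeff \<mu> 0:]\<close> by simp
      then show False using mu(1) by simp
    qed
    ultimately show False using mu(2) by simp
  qed
  have "\<mu> dvd smult c \<mu>" by (rule dvd_smult) simp
  then have "\<mu> dvd h * s" using cs by simp
  then have "\<mu> dvd h \<or> \<mu> dvd s" using mu(1) prime_elem_dvd_mult_iff by blast
  moreover have "\<not> \<mu> dvd s"
  proof
    assume "\<mu> dvd s"
    then obtain t where t: "s = \<mu> * t" by (auto elim: dvdE)
    have e: "smult c \<mu> = (h * t) * \<mu>" using cs t by (simp add: ac_simps)
    have "([:c:] - h * t) * \<mu> = 0" using e by (simp add: algebra_simps)
    moreover have "\<mu> \<noteq> 0" using mu(1) by (simp add: prime_elem_def)
    ultimately have "[:c:] = h * t" by simp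
    then have "h dvd [:c:]" by simp
    then have "degree h = 0" using cs dvd_imp_degree_le[of h "[:c:]"] by simp
    then have "h = [:coeff h 0:]" using degree_0_id[of h] by simp
    then have "ev z h = of_int (coeff h 0)" using ev_const[of z "coeff h 0"] by simp
    moreover have "coeff h 0 \<noteq> 0"
    proof
      assume "coeff h 0 = 0"
      then have "h = 0" using \<open>h = [:coeff h 0:]\<close> by simp
      then show False using hS unfolding S_def by simp
    qed
    ultimately show False using hS unfolding S_def by simp
  qed
  ultimately have "\<mu> dvd h" by blast
  then have "\<mu> dvd smult c' g" using cq by simp
  then have "\<mu> dvd [:c':] * g" by simp
  then have "\<mu> dvd [:c':] \<or> \<mu> dvd g" using mu(1) prime_elem_dvd_mult_iff by blast
  then show ?thesis using nc cq by blast
qed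

lemma monic_const_cong:
  fixes \<mu> h G :: "int poly"
  assumes mon: "lead_coeff \<mu> = 1" and deg: "degree \<mu> \<ge> 1"
    and eq: "\<mu> * h = smult p G - [:c:]"
  shows "p dvd c"
proof -
  have "\<forall>i\<ge>degree \<mu>. p dvd coeff (\<mu> * h) i"
  proof (intro allI impI)
    fix i assume "i \<ge> degree \<mu>"
    then have "i > 0" using deg by simp
    then show "p dvd coeff (\<mu> * h) i" unfolding eq by (cases i) auto
  qed
  then have all: "\<forall>i. p dvd coeff h i" using monic_mult_modq[OF mon] by blast
  have "coeff (\<mu> * h) 0 = coeff \<mu> 0 * coeff h 0" by (simp add: coeff_mult)
  then have "p dvd coeff (\<mu> * h) 0" using all by simp
  then have "p dvd p * coeff G 0 - c" unfolding eq by simp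
  then have "p dvd p * coeff G 0 - (p * coeff G 0 - c)" by (rule dvd_diff[OF dvd_triv_left])
  moreover have "p * coeff G 0 - (p * coeff G 0 - c) = c" by (simp add: algebra_simps)
  ultimately show "p dvd c" by (simp only:)
qed

definition cyc :: "nat \<Rightarrow> int poly" where
  "cyc d = (SOME \<mu>. prime_elem \<mu> \<and> lead_coeff \<mu> = 1 \<and> \<mu> dvd Xp d \<and> ev (zeta d) \<mu> = 0)"

lemma cyc_props:
  assumes d: "d > 0"
  shows "prime_elem (cyc d) \<and> lead_coeff (cyc d) = 1 \<and> cyc d dvd Xp d \<and> ev (zeta d) (cyc d) = 0"
  unfolding cyc_def by (rule someI_ex[OF exists_monic_root[OF d zeta_pow_self[OF d]]])

lemma cyc_prime: "d > 0 \<Longrightarrow> prime_elem (cyc d)" using cyc_props by blast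
lemma cyc_monic: "d > 0 \<Longrightarrow> lead_coeff (cyc d) = 1" using cyc_props by blast
lemma cyc_dvd_Xp: "d > 0 \<Longrightarrow> cyc d dvd Xp d" using cyc_props by blast
lemma cyc_root: "d > 0 \<Longrightarrow> ev (zeta d) (cyc d) = 0" using cyc_props by blast
lemma cyc_nonzero: "d > 0 \<Longrightarrow> cyc d \<noteq> 0" using cyc_prime by (simp add: prime_elem_def)

lemma dedekind:
  assumes d: "d > 0" and w: "w ^ d = 1"
    and mu: "prime_elem \<mu>" "lead_coeff \<mu> = 1" "ev w \<mu> = 0"
    and p: "prime p" "\<not> p dvd d"
  shows "ev (w ^ p) \<mu> = 0"
proof -
  have "(w ^ p) ^ d = (w ^ d) ^ p" by (simp only: power_mult[symmetric] mult.commute)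
  then have wp: "(w ^ p) ^ d = 1" using w by simp
  obtain \<nu> where nu: "prime_elem \<nu>" "lead_coeff \<nu> = 1" "\<nu> dvd Xp d" "ev (w ^ p) \<nu> = 0"
    using exists_monic_root[OF d wp] by blast
  have "ev w \<nu> = 0"
  proof (rule ccontr)
    assume nz: "ev w \<nu> \<noteq> 0"
    from nu(3) obtain W where W: "Xp d = \<nu> * W" by (rule dvdE)
    have "ev w (Xp d) = 0" using w by simp
    then have "ev w \<nu> * ev w W = 0" using W by simp
    then have W0: "ev w W = 0" using nz by simp
    have "pderiv (Xp d) = \<nu> * pderiv W + W * pderiv \<nu>" unfolding W by (rule pderiv_mult)
    then have "ev w (pderiv (Xp d)) = ev w \<nu> * ev w (pderiv W)" using W0 by simp
    moreover have "ev w (pderiv (Xp d)) = of_nat d * w ^ (d - 1)"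
      unfolding Xp_def by (simp add: pderiv_diff pderiv_monom)
    ultimately have D: "of_nat d * w ^ (d - 1) = ev w \<nu> * ev w (pderiv W)" by simp
    obtain r where r: "\<nu> ^ p = pcompose \<nu> (monom 1 p) + smult (int p) r" using frob[OF p(1)] by blast
    have "ev w (\<nu> ^ p) = ev (w ^ p) \<nu> + of_int (int p) * ev w r"
      unfolding r by (simp add: ev_pcompose)
    then have Ap: "ev w \<nu> ^ p = of_nat p * ev w r" using nu(4) by simp
    have "(of_nat d * w ^ (d - 1)) ^ p * w ^ p = (ev w \<nu>) ^ p * (ev w (pderiv W)) ^ p * w ^ p"
      unfolding D by (simp add: power_mult_distrib)
    also have "\<dots> = of_nat p * (ev w r * ev w (pderiv W) ^ p * w ^ p)" unfolding Ap by (simp add: ac_simps)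
    finally have E1: "(of_nat d * w ^ (d - 1)) ^ p * w ^ p = of_nat p * (ev w r * ev w (pderiv W) ^ p * w ^ p)" .
    have "w ^ (d - 1) * w = w ^ d" using d by (metis Suc_diff_1 power_Suc2)
    have "(of_nat d * w ^ (d - 1)) ^ p * w ^ p = of_nat d ^ p * ((w ^ (d - 1) * w) ^ p)"
      by (simp only: power_mult_distrib mult.assoc)
    then have "(of_nat d * w ^ (d - 1)) ^ p * w ^ p = of_nat d ^ p * (w ^ d) ^ p"
      using \<open>w ^ (d - 1) * w = w ^ d\<close> by simp
    also have "\<dots> = of_nat (d ^ p)" using w by simp
    finally have E2: "(of_nat d * w ^ (d - 1)) ^ p * w ^ p = of_nat (d ^ p)" .
    define G where "G = r * (pderiv W) ^ p * monom 1 p"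
    have evG: "ev w G = ev w r * ev w (pderiv W) ^ p * w ^ p" unfolding G_def by simp
    have E3: "of_nat (d ^ p) = of_nat p * (ev w r * ev w (pderiv W) ^ p * w ^ p)"
      by (rule trans[OF E2[symmetric] E1])
    have "of_nat (d ^ p) = of_nat p * ev w G" unfolding evG by (rule E3)
    then have "ev w (smult (int p) G - [:int (d ^ p):]) = 0" by simp
    then have "\<mu> dvd smult (int p) G - [:int (d ^ p):]" by (rule prime_root_dvd[OF mu(1) mu(3)])
    then obtain h where h: "smult (int p) G - [:int (d ^ p):] = \<mu> * h" by (rule dvdE)
    have "int p dvd int (d ^ p)"
      by (rule monic_const_cong[OF mu(2) prime_elem_degree[OF mu(1) mu(2)] h[symmetric]])
    then have "p dvd d ^ p" by (simp only: of_nat_dvd_iff)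
    then have "p dvd d" using p(1) prime_dvd_power by blast
    then show False using p(2) by simp
  qed
  then have "\<nu> dvd \<mu>" by (rule prime_root_dvd[OF nu(1) _ mu(3)])
  then show ?thesis using nu(4) by (rule ev_dvd)
qed

lemma zeta_1: "zeta 1 = 1"
  using zeta_pow_self[of 1] by simp

lemma cyc_root_coprime:
  assumes d: "d > 0"
  shows "coprime k d \<Longrightarrow> ev (zeta d ^ k) (cyc d) = 0"
proof (induction k rule: less_induct)
  case (less k)
  show ?case
  proof (cases "k \<le> 1")
    case True
    then consider "k = 0" | "k = 1" by linarith
    then show ?thesis
    proof cases
      case 1
      then have "d = 1" using less.prems by simp
      then show ?thesis using 1 cyc_root[of 1] zeta_1 by simp
    next
      case 2
      then show ?thesis using cyc_root[OF d] by simp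
    qed
  next
    case False
    then have "k \<noteq> 1" by simp
    then obtain p where p: "prime p" "p dvd k" using prime_factor_nat by blast
    from p(2) obtain k' where k': "k = p * k'" by (rule dvdE)
    have "k' < k" using k' p(1) False prime_gt_1_nat by (cases "k' = 0") auto
    have "coprime k' d" using less.prems k' by simp
    have "\<not> p dvd d"
    proof
      assume "p dvd d"
      then have pg: "p dvd gcd k d" using p(2) by simp
      have g: "gcd k d = 1" using less.prems by (simp add: coprime_iff_gcd_eq_1)
      have "p dvd 1" using pg g by simp
      then show False using p(1) by simp
    qed
    have IH: "ev (zeta d ^ k') (cyc d) = 0" using less.IH[OF \<open>k' < k\<close> \<open>coprime k' d\<close>] .
    have "(zeta d ^ k') ^ d = (zeta d ^ d) ^ k'" by (simp only: power_mult[symmetric] mult.commute)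
    then have w: "(zeta d ^ k') ^ d = 1" using zeta_pow_self[OF d] by simp
    have "ev ((zeta d ^ k') ^ p) (cyc d) = 0"
      by (rule dedekind[OF d w cyc_prime[OF d] cyc_monic[OF d] IH p(1) \<open>\<not> p dvd d\<close>])
    moreover have "(zeta d ^ k') ^ p = zeta d ^ k" using k' by (simp only: power_mult[symmetric] mult.commute)
    ultimately show ?thesis by simp
  qed
qed

lemma cyc_inj:
  assumes "d > 0" "e > 0" "cyc d = cyc e"
  shows "d = e"
proof -
  have "ev (zeta e) (Xp d) = 0" using ev_dvd[OF cyc_dvd_Xp[OF assms(1)]] cyc_root[OF assms(2)] assms(3) by simp
  then have "e dvd d" using zeta_pow_eq_1[OF assms(2)] by simp
  moreover have "ev (zeta d) (Xp e) = 0" using ev_dvd[OF cyc_dvd_Xp[OF assms(2)]] cyc_root[OF assms(1)] assms(3) by simp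
  then have "d dvd e" using zeta_pow_eq_1[OF assms(1)] by simp
  ultimately show ?thesis by (simp add: dvd_antisym)
qed

lemma cyc_degree_ge:
  assumes d: "d > 0"
  shows "totient d \<le> degree (cyc d)"
proof -
  define P where "P = map_poly (of_int :: int \<Rightarrow> complex) (cyc d)"
  have degP: "degree P = degree (cyc d)" unfolding P_def by (rule degree_map_poly) simp
  have P0: "P \<noteq> 0"
  proof
    assume "P = 0"
    then have "lead_coeff P = 0" by simp
    moreover have "lead_coeff P = 1" unfolding P_def using cyc_monic[OF d]
      by (simp add: degree_map_poly coeff_map_poly)
    ultimately show False by simp
  qed
  have sub: "(\<lambda>k. zeta d ^ k) ` totatives d \<subseteq> {x. poly P x = 0}"
  proof
    fix x assume "x \<in> (\<lambda>k. zeta d ^ k) ` totatives d"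
    then obtain k where k: "k \<in> totatives d" "x = zeta d ^ k" by blast
    have "coprime k d" using k(1) by (simp add: totatives_def)
    then have "ev (zeta d ^ k) (cyc d) = 0" by (rule cyc_root_coprime[OF d])
    then show "x \<in> {x. poly P x = 0}" using k(2) unfolding P_def ev_def by simp
  qed
  have inj: "inj_on (\<lambda>k. zeta d ^ k) (totatives d)"
  proof (rule inj_onI)
    fix k l assume kl: "k \<in> totatives d" "l \<in> totatives d" "zeta d ^ k = zeta d ^ l"
    show "k = l"
    proof (cases "d = 1")
      case True
      then show ?thesis using kl by simp
    next
      case False
      then have "1 < d" using d by simp
      then have "k < d" "l < d" using kl totatives_less by blast+
      moreover have "k mod d = l mod d" using kl(3) zeta_pow_eq[OF d] by simp
      ultimately show ?thesis by simp
    qed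
  qed
  have "totient d = card ((\<lambda>k. zeta d ^ k) ` totatives d)"
    unfolding totient_def using inj by (simp add: card_image)
  also have "\<dots> \<le> card {x. poly P x = 0}" by (rule card_mono[OF poly_roots_finite[OF P0] sub])
  also have "\<dots> \<le> degree P" by (rule card_poly_roots_bound[OF P0])
  finally show ?thesis using degP by simp
qed

lemma prime_dvd_prod_set:
  fixes f :: "nat \<Rightarrow> int poly"
  assumes q: "prime_elem q" and fin: "finite S"
  shows "q dvd (\<Prod>e\<in>S. f e) \<Longrightarrow> \<exists>e\<in>S. q dvd f e"
  using fin
proof (induction S rule: finite_induct)
  case empty
  then show ?case using q prime_elem_not_unit by auto
next
  case (insert x S)
  then have "q dvd f x * (\<Prod>e\<in>S. f e)" by simp
  then have "q dvd f x \<or> q dvd (\<Prod>e\<in>S. f e)" using q prime_elem_dvd_mult_iff by blast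
  then show ?case using insert by blast
qed

lemma normalize_monic:
  fixes p :: "int poly"
  assumes "lead_coeff p = 1"
  shows "normalize p = p"
  using assms by (simp add: normalize_poly_eq_map_poly)

lemma cyc_dvd_cyc:
  assumes "d > 0" "e > 0" "cyc d dvd cyc e"
  shows "d = e"
proof -
  have "normalize (cyc d) = normalize (cyc e)"
    by (rule prime_elem_associated[OF cyc_prime[OF assms(2)] cyc_prime[OF assms(1)] assms(3)])
  then have "cyc d = cyc e" using normalize_monic cyc_monic assms by metis
  then show ?thesis using cyc_inj assms by blast
qed

lemma cyc_prod_dvd:
  assumes fin: "finite S" and pos: "\<forall>e\<in>S. e > 0"
  shows "(\<forall>e\<in>S. cyc e dvd g) \<Longrightarrow> (\<Prod>e\<in>S. cyc e) dvd g"
  using fin pos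
proof (induction S rule: finite_induct)
  case empty
  then show ?case by simp
next
  case (insert x S)
  have x0: "x > 0" using insert by simp
  have "\<not> cyc x dvd (\<Prod>e\<in>S. cyc e)"
  proof
    assume "cyc x dvd (\<Prod>e\<in>S. cyc e)"
    then obtain e where e: "e \<in> S" "cyc x dvd cyc e"
      using prime_dvd_prod_set[OF cyc_prime[OF x0] insert.hyps(1)] by blast
    then have "x = e" using cyc_dvd_cyc[OF x0] insert.prems by simp
    then show False using e insert.hyps(2) by simp
  qed
  then have cop: "coprime (cyc x) (\<Prod>e\<in>S. cyc e)" by (rule prime_elem_imp_coprime[OF cyc_prime[OF x0]])
  have "(\<Prod>e\<in>S. cyc e) dvd g" using insert by simp
  moreover have "cyc x dvd g" using insert by simp
  ultimately have "cyc x * (\<Prod>e\<in>S. cyc e) dvd g" using cop by (simp add: divides_mult)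
  then show ?case using insert.hyps by simp
qed

lemma cyc_degree:
  assumes d: "d > 0"
  shows "degree (cyc d) = totient d"
proof (rule ccontr)
  assume ne: "degree (cyc d) \<noteq> totient d"
  define S where "S = {e. e dvd d}"
  have fin: "finite S" unfolding S_def using d by simp
  have pos: "\<forall>e\<in>S. e > 0" unfolding S_def using d by (auto intro: Nat.gr0I)
  have "\<forall>e\<in>S. cyc e dvd Xp d"
  proof
    fix e assume e: "e \<in> S"
    have "ev (zeta e) (Xp d) = 0" using e zeta_pow_eq_1 pos unfolding S_def by simp
    then show "cyc e dvd Xp d" using prime_root_dvd[OF cyc_prime cyc_root] pos e by blast
  qed
  then have dv: "(\<Prod>e\<in>S. cyc e) dvd Xp d" using cyc_prod_dvd[OF fin pos] by blast
  have "degree (\<Prod>e\<in>S. cyc e) \<le> degree (Xp d)" by (rule dvd_imp_degree_le[OF dv Xp_nonzero[OF d]])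
  moreover have "degree (\<Prod>e\<in>S. cyc e) = (\<Sum>e\<in>S. degree (cyc e))"
    by (rule degree_prod_eq_sum_degree) (use pos cyc_nonzero in blast)
  ultimately have le: "(\<Sum>e\<in>S. degree (cyc e)) \<le> d" using degree_Xp[OF d] by simp
  have "(\<Sum>e\<in>S. totient e) < (\<Sum>e\<in>S. degree (cyc e))"
  proof (rule sum_strict_mono_ex1[OF fin])
    show "\<forall>x\<in>S. totient x \<le> degree (cyc x)" using pos cyc_degree_ge by blast
    have "d \<in> S" unfolding S_def by simp
    moreover have "totient d < degree (cyc d)" using ne cyc_degree_ge[OF d] by simp
    ultimately show "\<exists>a\<in>S. totient a < degree (cyc a)" by blast
  qed
  moreover have "(\<Sum>e\<in>S. totient e) = d" unfolding S_def by (rule totient_divisor_sum)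
  ultimately show False using le by simp
qed

definition degok :: "int poly \<Rightarrow> int poly \<Rightarrow> bool" where
  "degok F r \<longleftrightarrow> r = 0 \<or> degree r < degree F"

definition pm :: "int poly \<Rightarrow> int poly \<Rightarrow> int poly" where
  "pm F h = pseudo_mod h F"

lemma pm_props:
  assumes mon: "lead_coeff F = 1"
  shows "\<exists>k. h = F * k + pm F h" and "degok F (pm F h)"
proof -
  have F0: "F \<noteq> 0" using mon by auto
  obtain q r where qr: "pseudo_divmod h F = (q, r)" by (cases "pseudo_divmod h F") auto
  have "smult (coeff F (degree F) ^ (Suc (degree h) - degree F)) h = F * q + r"
    by (rule pseudo_divmod(1)[OF F0 qr])
  then have "h = F * q + r" using mon by simp
  moreover have "pm F h = r" unfolding pm_def pseudo_mod_def qr by simp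
  ultimately have "h = F * q + pm F h" by simp
  then show "\<exists>k. h = F * k + pm F h" by blast
  show "degok F (pm F h)" unfolding degok_def pm_def using pseudo_mod(2)[OF F0, of h] by simp
qed

lemma degok_diff: "degok F a \<Longrightarrow> degok F b \<Longrightarrow> degok F (a - b)"
  unfolding degok_def
  by (metis degree_0 degree_diff_less diff_0 diff_self diff_zero degree_minus gr0I)

lemma degok_smult: "degok F a \<Longrightarrow> degok F (smult c a)"
  unfolding degok_def using degree_smult_le le_less_trans by (cases "c = 0") auto

lemma degok_dvd_zero:
  assumes "degok F r" "F dvd r" "F \<noteq> 0"
  shows "r = 0"
proof (rule ccontr)
  assume "r \<noteq> 0"
  then have "degree F \<le> degree r" using assms(2) by (rule dvd_imp_degree_le[rotated])
  then show False using assms(1) \<open>r \<noteq> 0\<close> unfolding degok_def by simp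
qed

lemma pm_unique:
  assumes mon: "lead_coeff F = 1" and d: "F dvd h - r" and ok: "degok F r"
  shows "pm F h = r"
proof -
  have F0: "F \<noteq> 0" using mon by auto
  obtain k where k: "h = F * k + pm F h" using pm_props(1)[OF mon] by blast
  obtain k' where k': "h - r = F * k'" using d by (rule dvdE)
  have "pm F h - r = F * (k' - k)" using k k' by (simp add: algebra_simps)
  then have "F dvd pm F h - r" by simp
  moreover have "degok F (pm F h - r)" by (rule degok_diff[OF pm_props(2)[OF mon] ok])
  ultimately have "pm F h - r = 0" using degok_dvd_zero F0 by blast
  then show ?thesis by simp
qed

definition red :: "int \<Rightarrow> int poly \<Rightarrow> int poly \<Rightarrow> int poly" where
  "red q F h = map_poly (\<lambda>c. c mod q) (pm F h)"

lemma red_eq_iff: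
  assumes mon: "lead_coeff F = 1" and q: "q > 0"
  shows "red q F h = red q F h' \<longleftrightarrow> (\<exists>a v. h - h' = F * a + smult q v)"
proof
  assume e: "red q F h = red q F h'"
  obtain k where k: "h = F * k + pm F h" using pm_props(1)[OF mon] by blast
  obtain k' where k': "h' = F * k' + pm F h'" using pm_props(1)[OF mon] by blast
  have "\<forall>i. q dvd coeff (pm F h - pm F h') i"
  proof
    fix i
    have "coeff (red q F h) i = coeff (red q F h') i" using e by simp
    then have "coeff (pm F h) i mod q = coeff (pm F h') i mod q" unfolding red_def
      by (simp add: coeff_map_poly)
    then show "q dvd coeff (pm F h - pm F h') i" by (simp add: mod_eq_dvd_iff)
  qed
  then obtain v where v: "pm F h - pm F h' = smult q v" using smult_of_dvd_coeffs by blast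
  have "h - h' = F * (k - k') + smult q v" using k k' v by (simp add: algebra_simps)
  then show "\<exists>a v. h - h' = F * a + smult q v" by blast
next
  assume "\<exists>a v. h - h' = F * a + smult q v"
  then obtain a v where av: "h - h' = F * a + smult q v" by blast
  obtain kv where kv: "v = F * kv + pm F v" using pm_props(1)[OF mon] by blast
  have "pm F (h - h') = smult q (pm F v)"
  proof (rule pm_unique[OF mon])
    have sv0: "smult q v = smult q (F * kv + pm F v)" by (rule arg_cong[OF kv])
    have sv: "smult q v = F * smult q kv + smult q (pm F v)"
      using sv0 by (simp only: smult_add_right mult_smult_right)
    have "h - h' - smult q (pm F v) = F * (a + smult q kv)"
      using av sv by (simp add: algebra_simps)
    then show "F dvd h - h' - smult q (pm F v)" by simp
    show "degok F (smult q (pm F v))" by (rule degok_smult[OF pm_props(2)[OF mon]])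
  qed
  moreover have "pm F (h - h') = pm F h - pm F h'"
  proof (rule pm_unique[OF mon])
    obtain k where k: "h = F * k + pm F h" using pm_props(1)[OF mon] by blast
    obtain k' where k': "h' = F * k' + pm F h'" using pm_props(1)[OF mon] by blast
    have "h - h' - (pm F h - pm F h') = F * (k - k')" using k k' by (simp add: algebra_simps)
    then show "F dvd h - h' - (pm F h - pm F h')" by simp
    show "degok F (pm F h - pm F h')" by (rule degok_diff[OF pm_props(2)[OF mon] pm_props(2)[OF mon]])
  qed
  ultimately have eq: "pm F h - pm F h' = smult q (pm F v)" by simp
  show "red q F h = red q F h'"
  proof (rule poly_eqI)
    fix i
    have "coeff (pm F h) i - coeff (pm F h') i = q * coeff (pm F v) i"
      using arg_cong[OF eq, of "\<lambda>x. coeff x i"] by simp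
    then have "coeff (pm F h) i mod q = coeff (pm F h') i mod q"
      by (simp add: mod_eq_dvd_iff)
    then show "coeff (red q F h) i = coeff (red q F h') i" unfolding red_def
      by (simp add: coeff_map_poly)
  qed
qed

definition Wset :: "int \<Rightarrow> nat \<Rightarrow> int poly set" where
  "Wset q D = {r. (\<forall>i. coeff r i \<in> {0..<q}) \<and> (\<forall>i\<ge>D. coeff r i = 0)}"

lemma card_Wset:
  assumes q: "q > 0"
  shows "card (Wset q D) = nat q ^ D"
proof -
  define L where "L = {xs. set xs \<subseteq> {0..<q} \<and> length xs = D}"
  have W: "Wset q D = Poly ` L"
  proof
    show "Wset q D \<subseteq> Poly ` L"
    proof
      fix r assume r: "r \<in> Wset q D"
      define xs where "xs = map (coeff r) [0..<D]"
      have "xs \<in> L" unfolding L_def xs_def using r unfolding Wset_def by auto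
      moreover have "r = Poly xs"
      proof (rule poly_eqI)
        fix i
        show "coeff r i = coeff (Poly xs) i"
          using r unfolding Wset_def xs_def by (cases "i < D") (auto simp: nth_default_def)
      qed
      ultimately show "r \<in> Poly ` L" by blast
    qed
  next
    show "Poly ` L \<subseteq> Wset q D"
    proof
      fix r assume "r \<in> Poly ` L"
      then obtain xs where xs: "xs \<in> L" "r = Poly xs" by blast
      have "coeff r i \<in> {0..<q}" for i
      proof (cases "i < length xs")
        case True
        then have "xs ! i \<in> set xs" by simp
        then have "xs ! i \<in> {0..<q}" using xs(1) unfolding L_def by blast
        then show ?thesis using xs(2) True by (simp add: nth_default_def)
      next
        case False
        then show ?thesis using xs(2) q by (simp add: nth_default_def)
      qed
      moreover have "coeff r i = 0" if "i \<ge> D" for i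
        using xs that unfolding L_def by (auto simp: nth_default_def)
      ultimately show "r \<in> Wset q D" unfolding Wset_def by blast
    qed
  qed
  have inj: "inj_on Poly L"
  proof (rule inj_onI)
    fix xs ys assume xs: "xs \<in> L" and ys: "ys \<in> L" and e: "Poly xs = Poly ys"
    have l: "length xs = length ys" using xs ys unfolding L_def by simp
    show "xs = ys"
    proof (rule nth_equalityI[OF l])
      fix i assume i: "i < length xs"
      have "coeff (Poly xs) i = coeff (Poly ys) i" using e by simp
      then show "xs ! i = ys ! i" using i l by (simp add: nth_default_def)
    qed
  qed
  have "card (Wset q D) = card L" unfolding W using inj by (simp add: card_image)
  also have "\<dots> = card {0..<q} ^ D" unfolding L_def by (rule card_lists_length_eq) simp
  finally show ?thesis by simp
qed

lemma red_in_Wset: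
  assumes mon: "lead_coeff F = 1" and q: "q > 0"
  shows "red q F h \<in> Wset q (degree F)"
proof -
  have ok: "degok F (pm F h)" by (rule pm_props(2)[OF mon])
  have "coeff (pm F h) i = 0" if "i \<ge> degree F" for i
    using ok that unfolding degok_def by (auto intro: coeff_eq_0)
  then show ?thesis unfolding Wset_def red_def using q by (auto simp: coeff_map_poly)
qed

lemma red_Wset:
  assumes mon: "lead_coeff F = 1" and q: "q > 0" and r: "r \<in> Wset q (degree F)"
  shows "red q F r = r"
proof -
  have "degok F r"
  proof (cases "r = 0")
    case False
    have "degree r < degree F"
    proof (rule ccontr)
      assume "\<not> degree r < degree F"
      then have "coeff r (degree r) = 0" using r unfolding Wset_def by simp
      then show False using False by simp
    qed
    then show ?thesis unfolding degok_def by simp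
  qed (simp add: degok_def)
  then have "pm F r = r" by (intro pm_unique[OF mon]) simp_all
  moreover have "map_poly (\<lambda>c. c mod q) r = r"
    by (rule poly_eqI) (use r in \<open>auto simp: Wset_def coeff_map_poly\<close>)
  ultimately show ?thesis unfolding red_def by simp
qed

definition evB :: "nat set \<Rightarrow> int poly \<Rightarrow> nat \<Rightarrow> complex" where
  "evB B g = (\<lambda>d. if d \<in> B then ev (zeta d) g else 0)"

definition TT :: "nat set \<Rightarrow> (nat \<Rightarrow> complex) set" where
  "TT B = {f. (\<forall>d\<in>B. f d \<in> int_cyclotomic_ring d) \<and> (\<forall>d. d \<notin> B \<longrightarrow> f d = 0)}"

definition RR :: "nat set \<Rightarrow> (nat \<Rightarrow> complex) set" where
  "RR B = range (evB B)"

definition FB :: "nat set \<Rightarrow> int poly" where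
  "FB B = (\<Prod>d\<in>B. cyc d)"

definition idx :: "nat set \<Rightarrow> nat" where
  "idx B = card (cset (RR B) ` TT B)"

definition SS :: "nat set \<Rightarrow> nat set \<Rightarrow> (nat \<Rightarrow> complex) set" where
  "SS B1 B2 = {x + y | x y. x \<in> RR B1 \<and> y \<in> RR B2}"

lemma icr_eq: "int_cyclotomic_ring d = range (\<lambda>p. ev (zeta d) p)"
  unfolding int_cyclotomic_ring_def ev_def by auto

lemma evB_add: "evB B (f + g) = evB B f + evB B g"
  unfolding evB_def by (rule ext) simp
lemma evB_diff: "evB B (f - g) = evB B f - evB B g"
  unfolding evB_def by (rule ext) simp
lemma evB_0: "evB B 0 = 0"
  unfolding evB_def by (rule ext) simp

lemma subgrp_RR: "subgrp (RR B)"
  unfolding subgrp_def RR_def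
proof (intro conjI ballI)
  show "0 \<in> range (evB B)" using evB_0 by (metis rangeI)
next
  fix x y assume "x \<in> range (evB B)" "y \<in> range (evB B)"
  then obtain f g where fg: "x = evB B f" "y = evB B g" by blast
  show "x + y \<in> range (evB B)" using fg evB_add by (metis rangeI)
  show "x - y \<in> range (evB B)" using fg evB_diff by (metis rangeI)
qed

lemma icr_add: 
  assumes "a \<in> int_cyclotomic_ring d" "b \<in> int_cyclotomic_ring d" shows "a + b \<in> int_cyclotomic_ring d"
proof -
  obtain p q where "a = ev (zeta d) p" "b = ev (zeta d) q" using assms unfolding icr_eq by blast
  then have "a + b = ev (zeta d) (p + q)" by simp
  then show ?thesis unfolding icr_eq by blast
qed
lemma icr_diff: 
  assumes "a \<in> int_cyclotomic_ring d" "b \<in> int_cyclotomic_ring d" shows "a - b \<in> int_cyclotomic_ring d"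
proof -
  obtain p q where "a = ev (zeta d) p" "b = ev (zeta d) q" using assms unfolding icr_eq by blast
  then have "a - b = ev (zeta d) (p - q)" by simp
  then show ?thesis unfolding icr_eq by blast
qed
lemma icr_0: "0 \<in> int_cyclotomic_ring d"
  unfolding icr_eq by (metis ev_0 rangeI)

lemma subgrp_TT: "subgrp (TT B)"
  unfolding subgrp_def TT_def by (auto intro: icr_add icr_diff icr_0)

lemma RR_sub_TT: "RR B \<subseteq> TT B"
  unfolding RR_def TT_def evB_def icr_eq by auto

lemma TT_zero: "f \<in> TT B \<Longrightarrow> d \<notin> B \<Longrightarrow> f d = 0"
  unfolding TT_def by auto

lemma RR_zero: "f \<in> RR B \<Longrightarrow> d \<notin> B \<Longrightarrow> f d = 0"
  using RR_sub_TT TT_zero by blast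

lemma FB_monic:
  assumes "finite B" "\<forall>d\<in>B. d > 0"
  shows "lead_coeff (FB B) = 1"
  unfolding FB_def lead_coeff_prod using assms cyc_monic by simp

lemma FB_degree:
  assumes "finite B" "\<forall>d\<in>B. d > 0"
  shows "degree (FB B) = (\<Sum>d\<in>B. totient d)"
proof -
  have "degree (FB B) = (\<Sum>d\<in>B. degree (cyc d))" unfolding FB_def
    by (rule degree_prod_eq_sum_degree) (use assms cyc_nonzero in blast)
  also have "\<dots> = (\<Sum>d\<in>B. totient d)" using assms cyc_degree by simp
  finally show ?thesis .
qed

lemma FB_dvd_iff:
  assumes fin: "finite B" and pos: "\<forall>d\<in>B. d > 0"
  shows "FB B dvd g \<longleftrightarrow> (\<forall>d\<in>B. ev (zeta d) g = 0)"
proof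
  assume h: "FB B dvd g"
  show "\<forall>d\<in>B. ev (zeta d) g = 0"
  proof
    fix d assume d: "d \<in> B"
    have "cyc d dvd FB B" unfolding FB_def using fin d by (rule dvd_prodI)
    then have "cyc d dvd g" using h by (rule dvd_trans)
    then show "ev (zeta d) g = 0" using cyc_root pos d ev_dvd by blast
  qed
next
  assume h: "\<forall>d\<in>B. ev (zeta d) g = 0"
  have "\<forall>d\<in>B. cyc d dvd g"
  proof
    fix d assume d: "d \<in> B"
    show "cyc d dvd g" by (rule prime_root_dvd[OF cyc_prime cyc_root]) (use d pos h in auto)
  qed
  then show "FB B dvd g" unfolding FB_def using cyc_prod_dvd[OF fin pos] by blast
qed

lemma evB_eq_iff:
  assumes fin: "finite B" and pos: "\<forall>d\<in>B. d > 0"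
  shows "evB B g = evB B h \<longleftrightarrow> FB B dvd g - h"
proof -
  have "evB B g = evB B h \<longleftrightarrow> (\<forall>d\<in>B. ev (zeta d) g = ev (zeta d) h)"
    unfolding evB_def by (auto simp: fun_eq_iff)
  also have "\<dots> \<longleftrightarrow> (\<forall>d\<in>B. ev (zeta d) (g - h) = 0)" by simp
  also have "\<dots> \<longleftrightarrow> FB B dvd g - h" using FB_dvd_iff[OF fin pos] by simp
  finally show ?thesis .
qed

lemma cset_self: "subgrp C \<Longrightarrow> x \<in> C \<Longrightarrow> cset C x = C"
proof -
  assume C: "subgrp C" and x: "x \<in> C"
  have "cset C x = cset C 0" using cset_eq_iff[OF C] x by simp
  moreover have "cset C 0 = C" unfolding cset_def by simp
  ultimately show ?thesis by simp
qed

lemma idx_single: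
  assumes "d > 0"
  shows "idx {d} = 1"
proof -
  have "TT {d} \<subseteq> RR {d}"
  proof
    fix f assume f: "f \<in> TT {d}"
    then obtain p where p: "f d = ev (zeta d) p" unfolding TT_def icr_eq by auto
    have "f = evB {d} p"
    proof (rule ext)
      fix e show "f e = evB {d} p e"
        using f p unfolding evB_def TT_def by (cases "e = d") auto
    qed
    then show "f \<in> RR {d}" unfolding RR_def by simp
  qed
  then have eq: "TT {d} = RR {d}" using RR_sub_TT by blast
  have "cset (RR {d}) ` TT {d} = {RR {d}}"
  proof
    show "cset (RR {d}) ` TT {d} \<subseteq> {RR {d}}" using cset_self[OF subgrp_RR] eq by auto
    have "0 \<in> TT {d}" using subgrp_TT unfolding subgrp_def by blast
    then show "{RR {d}} \<subseteq> cset (RR {d}) ` TT {d}" using cset_self[OF subgrp_RR] eq by force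
  qed
  then show ?thesis unfolding idx_def by simp
qed

definition restr :: "nat set \<Rightarrow> (nat \<Rightarrow> complex) \<Rightarrow> nat \<Rightarrow> complex" where
  "restr B f = (\<lambda>d. if d \<in> B then f d else 0)"

lemma subgrp_SS: "subgrp (SS B1 B2)"
  unfolding subgrp_def SS_def
proof (intro conjI ballI)
  have "(0::nat \<Rightarrow> complex) \<in> RR B1" "(0::nat \<Rightarrow> complex) \<in> RR B2"
    using subgrp_RR unfolding subgrp_def by blast+
  moreover have "(0::nat \<Rightarrow> complex) = 0 + 0" by simp
  ultimately show "0 \<in> {x + y |x y. x \<in> RR B1 \<and> y \<in> RR B2}" by blast
next
  fix a b assume a: "a \<in> {x + y |x y. x \<in> RR B1 \<and> y \<in> RR B2}" and b: "b \<in> {x + y |x y. x \<in> RR B1 \<and> y \<in> RR B2}"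
  obtain x y where xy: "a = x + y" "x \<in> RR B1" "y \<in> RR B2" using a by blast
  obtain x' y' where xy': "b = x' + y'" "x' \<in> RR B1" "y' \<in> RR B2" using b by blast
  have "x + x' \<in> RR B1" "x - x' \<in> RR B1" using xy xy' subgrp_RR unfolding subgrp_def by blast+
  moreover have "y + y' \<in> RR B2" "y - y' \<in> RR B2" using xy xy' subgrp_RR unfolding subgrp_def by blast+
  moreover have "a + b = (x + x') + (y + y')" "a - b = (x - x') + (y - y')" using xy xy' by (simp_all add: algebra_simps)
  ultimately show "a + b \<in> {x + y |x y. x \<in> RR B1 \<and> y \<in> RR B2}"
    and "a - b \<in> {x + y |x y. x \<in> RR B1 \<and> y \<in> RR B2}" by blast+
qed

lemma TT_split:
  assumes disj: "B1 \<inter> B2 = {}"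
  shows "TT (B1 \<union> B2) = (\<lambda>(t1, t2). t1 + t2) ` (TT B1 \<times> TT B2)"
proof
  show "TT (B1 \<union> B2) \<subseteq> (\<lambda>(t1, t2). t1 + t2) ` (TT B1 \<times> TT B2)"
  proof
    fix f assume f: "f \<in> TT (B1 \<union> B2)"
    have r1: "restr B1 f \<in> TT B1" using f unfolding TT_def restr_def by auto
    have r2: "restr B2 f \<in> TT B2" using f unfolding TT_def restr_def by auto
    have "f = restr B1 f + restr B2 f"
    proof (rule ext)
      fix d show "f d = (restr B1 f + restr B2 f) d"
        using f disj unfolding restr_def TT_def by auto
    qed
    then have "f = (\<lambda>(t1, t2). t1 + t2) (restr B1 f, restr B2 f)" by simp
    moreover have "(restr B1 f, restr B2 f) \<in> TT B1 \<times> TT B2" using r1 r2 by simp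
    ultimately show "f \<in> (\<lambda>(t1, t2). t1 + t2) ` (TT B1 \<times> TT B2)" by (rule image_eqI)
  qed
next
  show "(\<lambda>(t1, t2). t1 + t2) ` (TT B1 \<times> TT B2) \<subseteq> TT (B1 \<union> B2)"
  proof
    fix f assume "f \<in> (\<lambda>(t1, t2). t1 + t2) ` (TT B1 \<times> TT B2)"
    then obtain pr where pr: "pr \<in> TT B1 \<times> TT B2" "f = (\<lambda>(t1, t2). t1 + t2) pr" by (rule imageE)
    obtain t1 t2 where prt: "pr = (t1, t2)" by (cases pr)
    have t: "t1 \<in> TT B1" "t2 \<in> TT B2" "f = t1 + t2" using pr prt by auto
    have "\<forall>d\<in>B1 \<union> B2. f d \<in> int_cyclotomic_ring d"
    proof
      fix d assume d: "d \<in> B1 \<union> B2"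
      show "f d \<in> int_cyclotomic_ring d"
      proof (cases "d \<in> B1")
        case True
        then have "d \<notin> B2" using disj by blast
        then have "t2 d = 0" using t TT_zero by blast
        then show ?thesis using t True unfolding TT_def by auto
      next
        case False
        then have "d \<in> B2" using d by blast
        then have "t1 d = 0" using t TT_zero False by blast
        then show ?thesis using t \<open>d \<in> B2\<close> unfolding TT_def by auto
      qed
    qed
    moreover have "\<forall>d. d \<notin> B1 \<union> B2 \<longrightarrow> f d = 0"
    proof (intro allI impI)
      fix d assume "d \<notin> B1 \<union> B2"
      then have "t1 d = 0" "t2 d = 0" using TT_zero t(1,2) by blast+
      then show "f d = 0" using t(3) by simp
    qed
    ultimately show "f \<in> TT (B1 \<union> B2)" unfolding TT_def by blast
  qed
qed

lemma sum_supp_eq: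
  fixes a1 a2 b1 b2 :: "nat \<Rightarrow> complex"
  assumes disj: "B1 \<inter> B2 = {}"
    and a: "\<And>d. d \<notin> B1 \<Longrightarrow> a1 d = 0" "\<And>d. d \<notin> B1 \<Longrightarrow> b1 d = 0"
    and b: "\<And>d. d \<notin> B2 \<Longrightarrow> a2 d = 0" "\<And>d. d \<notin> B2 \<Longrightarrow> b2 d = 0"
  shows "(a1 + a2 = b1 + b2) \<longleftrightarrow> (a1 = b1 \<and> a2 = b2)"
proof
  assume e: "a1 + a2 = b1 + b2"
  have "a1 d = b1 d \<and> a2 d = b2 d" for d
  proof -
    have ed: "a1 d + a2 d = b1 d + b2 d" using e by (metis plus_fun_apply)
    show ?thesis
    proof (cases "d \<in> B1")
      case True
      then have "d \<notin> B2" using disj by blast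
      then show ?thesis using ed b by simp
    next
      case False
      then show ?thesis using ed a by simp
    qed
  qed
  then show "a1 = b1 \<and> a2 = b2" by (simp add: fun_eq_iff)
qed simp

lemma prod_part:
  assumes disj: "B1 \<inter> B2 = {}"
  shows "card (cset (SS B1 B2) ` TT (B1 \<union> B2)) = idx B1 * idx B2"
proof -
  define \<psi> where "\<psi> = (\<lambda>(t1, t2). t1 + t2 :: nat \<Rightarrow> complex)"
  define \<chi> where "\<chi> = (\<lambda>(t1::nat \<Rightarrow> complex, t2::nat \<Rightarrow> complex). (cset (RR B1) t1, cset (RR B2) t2))"
  have "card (cset (SS B1 B2) ` TT (B1 \<union> B2)) = card (\<chi> ` (TT B1 \<times> TT B2))"
  proof (rule card_cosets_via[OF subgrp_SS])
    show "TT (B1 \<union> B2) = \<psi> ` (TT B1 \<times> TT B2)" unfolding \<psi>_def by (rule TT_split[OF disj])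
  next
    fix u v assume u: "u \<in> TT B1 \<times> TT B2" and v: "v \<in> TT B1 \<times> TT B2"
    obtain t1 t2 where ut: "u = (t1, t2)" "t1 \<in> TT B1" "t2 \<in> TT B2" using u by blast
    obtain s1 s2 where vs: "v = (s1, s2)" "s1 \<in> TT B1" "s2 \<in> TT B2" using v by blast
    have "(\<psi> u - \<psi> v \<in> SS B1 B2) \<longleftrightarrow> (t1 - s1 \<in> RR B1 \<and> t2 - s2 \<in> RR B2)"
    proof
      assume "\<psi> u - \<psi> v \<in> SS B1 B2"
      then obtain x y where xy: "\<psi> u - \<psi> v = x + y" "x \<in> RR B1" "y \<in> RR B2" unfolding SS_def by blast
      have "(t1 - s1) + (t2 - s2) = x + y" using xy(1) ut vs unfolding \<psi>_def by (simp add: algebra_simps)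
      moreover have "(t1 - s1) + (t2 - s2) = x + y \<longleftrightarrow> (t1 - s1 = x \<and> t2 - s2 = y)"
      proof (rule sum_supp_eq[OF disj])
        fix d
        show "d \<notin> B1 \<Longrightarrow> (t1 - s1) d = 0"
        proof -
          assume "d \<notin> B1"
          then have "t1 d = 0" "s1 d = 0" using TT_zero ut(2) vs(2) by blast+
          then show ?thesis by simp
        qed
        show "d \<notin> B2 \<Longrightarrow> (t2 - s2) d = 0"
        proof -
          assume "d \<notin> B2"
          then have "t2 d = 0" "s2 d = 0" using TT_zero ut(3) vs(3) by blast+
          then show ?thesis by simp
        qed
        show "d \<notin> B1 \<Longrightarrow> x d = 0" using xy RR_zero by blast
        show "d \<notin> B2 \<Longrightarrow> y d = 0" using xy RR_zero by blast
      qed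
      ultimately show "t1 - s1 \<in> RR B1 \<and> t2 - s2 \<in> RR B2" using xy by auto
    next
      assume "t1 - s1 \<in> RR B1 \<and> t2 - s2 \<in> RR B2"
      moreover have "\<psi> u - \<psi> v = (t1 - s1) + (t2 - s2)" using ut vs unfolding \<psi>_def by (simp add: algebra_simps)
      ultimately show "\<psi> u - \<psi> v \<in> SS B1 B2" unfolding SS_def by blast
    qed
    also have "\<dots> \<longleftrightarrow> \<chi> u = \<chi> v" unfolding \<chi>_def ut vs
      using cset_eq_iff[OF subgrp_RR] by simp
    finally show "(\<psi> u - \<psi> v \<in> SS B1 B2) = (\<chi> u = \<chi> v)" .
  qed
  also have "\<chi> ` (TT B1 \<times> TT B2) = (cset (RR B1) ` TT B1) \<times> (cset (RR B2) ` TT B2)"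
    unfolding \<chi>_def by (auto simp: image_iff)
  also have "card \<dots> = idx B1 * idx B2" unfolding idx_def by (rule card_cartesian_product)
  finally show ?thesis .
qed

lemma evB_union_eq:
  assumes disj: "B1 \<inter> B2 = {}"
  shows "evB (B1 \<union> B2) G = evB B1 h + evB B2 k \<longleftrightarrow> evB B1 G = evB B1 h \<and> evB B2 G = evB B2 k"
proof -
  have "evB (B1 \<union> B2) G = evB B1 G + evB B2 G"
    using disj unfolding evB_def by (auto simp: fun_eq_iff)
  moreover have "evB B1 G + evB B2 G = evB B1 h + evB B2 k \<longleftrightarrow> evB B1 G = evB B1 h \<and> evB B2 G = evB B2 k"
    by (rule sum_supp_eq[OF disj]) (auto simp: evB_def)
  ultimately show ?thesis by simp
qed

lemma ideal_crt:
  "(\<exists>G. F1 dvd G - h \<and> F2 dvd G - k) \<longleftrightarrow> (\<exists>a b. h - k = F1 * a + F2 * (b :: int poly))"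
proof
  assume "\<exists>G. F1 dvd G - h \<and> F2 dvd G - k"
  then obtain G a b where "G - h = F1 * a" "G - k = F2 * b" by (auto elim!: dvdE)
  then have "h - k = F1 * (- a) + F2 * b" by (simp add: algebra_simps)
  then show "\<exists>a b. h - k = F1 * a + F2 * b" by blast
next
  assume "\<exists>a b. h - k = F1 * a + F2 * b"
  then obtain a b where ab: "h - k = F1 * a + F2 * b" by blast
  define G where "G = h - F1 * a"
  have "G - h = F1 * (- a)" unfolding G_def by simp
  moreover have "G - k = F2 * b" unfolding G_def using ab by (simp add: algebra_simps)
  ultimately show "\<exists>G. F1 dvd G - h \<and> F2 dvd G - k" by (metis dvd_triv_left)
qed

lemma ideal_swap:
  fixes F1 F2 X :: "int poly"
  assumes a: "[:q:] = F1 * x + F2 * y" and b: "F2 = F1 * a0 + smult q b0"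
  shows "(\<exists>a b. X = F1 * a + F2 * b) \<longleftrightarrow> (\<exists>a v. X = F1 * a + smult q v)"
proof
  assume "\<exists>a b. X = F1 * a + F2 * b"
  then obtain a b where "X = F1 * a + F2 * b" by blast
  then have "X = F1 * (a + a0 * b) + smult q (b0 * b)" unfolding b by (simp add: algebra_simps)
  then show "\<exists>a v. X = F1 * a + smult q v" by blast
next
  assume "\<exists>a v. X = F1 * a + smult q v"
  then obtain a v where av: "X = F1 * a + smult q v" by blast
  have "smult q v = [:q:] * v" by simp
  then have "X = F1 * (a + x * v) + F2 * (y * v)" unfolding av a by (simp add: algebra_simps)
  then show "\<exists>a b. X = F1 * a + F2 * b" by blast
qed

lemma quot_part:
  assumes fin: "finite B1" "finite B2" and pos: "\<forall>d\<in>B1 \<union> B2. d > 0" and disj: "B1 \<inter> B2 = {}"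
    and q: "q > 0"
    and a: "[:q:] = FB B1 * x + FB B2 * y" and b: "FB B2 = FB B1 * a0 + smult q b0"
  shows "card (cset (RR (B1 \<union> B2)) ` SS B1 B2) = nat q ^ degree (FB B1)"
proof -
  have pos1: "\<forall>d\<in>B1. d > 0" and pos2: "\<forall>d\<in>B2. d > 0" using pos by auto
  have mon: "lead_coeff (FB B1) = 1" by (rule FB_monic[OF fin(1) pos1])
  define \<psi> where "\<psi> = (\<lambda>(g1, g2). evB B1 g1 + evB B2 g2)"
  define \<chi> where "\<chi> = (\<lambda>(g1 :: int poly, g2 :: int poly). red q (FB B1) (g1 - g2))"
  have "card (cset (RR (B1 \<union> B2)) ` SS B1 B2) = card (\<chi> ` UNIV)"
  proof (rule card_cosets_via[OF subgrp_RR])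
    show "SS B1 B2 = \<psi> ` UNIV" unfolding SS_def \<psi>_def RR_def by auto
  next
    fix u v :: "int poly \<times> int poly"
    obtain g1 g2 where u: "u = (g1, g2)" by (cases u)
    obtain g1' g2' where v: "v = (g1', g2')" by (cases v)
    define h where "h = g1 - g1'"
    define k where "k = g2 - g2'"
    have psi: "\<psi> u - \<psi> v = evB B1 h + evB B2 k"
      unfolding \<psi>_def u v h_def k_def by (simp add: evB_diff algebra_simps)
    have "(\<psi> u - \<psi> v \<in> RR (B1 \<union> B2)) \<longleftrightarrow> (\<exists>G. evB (B1 \<union> B2) G = evB B1 h + evB B2 k)"
      unfolding psi RR_def by (auto simp: eq_commute)
    also have "\<dots> \<longleftrightarrow> (\<exists>G. evB B1 G = evB B1 h \<and> evB B2 G = evB B2 k)"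
      using evB_union_eq[OF disj] by simp
    also have "\<dots> \<longleftrightarrow> (\<exists>G. FB B1 dvd G - h \<and> FB B2 dvd G - k)"
      using evB_eq_iff[OF fin(1) pos1] evB_eq_iff[OF fin(2) pos2] by simp
    also have "\<dots> \<longleftrightarrow> (\<exists>a b. h - k = FB B1 * a + FB B2 * b)" by (rule ideal_crt)
    also have "\<dots> \<longleftrightarrow> (\<exists>a v. h - k = FB B1 * a + smult q v)" by (rule ideal_swap[OF a b])
    also have "\<dots> \<longleftrightarrow> red q (FB B1) (g1 - g2) = red q (FB B1) (g1' - g2')"
    proof -
      have "h - k = (g1 - g2) - (g1' - g2')" unfolding h_def k_def by simp
      then show ?thesis using red_eq_iff[OF mon q, of "g1 - g2" "g1' - g2'"] by simp
    qed
    also have "\<dots> \<longleftrightarrow> \<chi> u = \<chi> v" unfolding \<chi>_def u v by simp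
    finally show "(\<psi> u - \<psi> v \<in> RR (B1 \<union> B2)) = (\<chi> u = \<chi> v)" .
  qed
  also have "\<chi> ` UNIV = Wset q (degree (FB B1))"
  proof
    show "\<chi> ` UNIV \<subseteq> Wset q (degree (FB B1))" unfolding \<chi>_def using red_in_Wset[OF mon q] by auto
    show "Wset q (degree (FB B1)) \<subseteq> \<chi> ` UNIV"
    proof
      fix r assume r: "r \<in> Wset q (degree (FB B1))"
      have "\<chi> (r, 0) = r" unfolding \<chi>_def using red_Wset[OF mon q r] by simp
      then show "r \<in> \<chi> ` UNIV" by (metis rangeI)
    qed
  qed
  also have "card \<dots> = nat q ^ degree (FB B1)" by (rule card_Wset[OF q])
  finally show ?thesis .
qed

lemma split_idx:
  assumes fin: "finite B1" "finite B2" and pos: "\<forall>d\<in>B1 \<union> B2. d > 0" and disj: "B1 \<inter> B2 = {}"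
    and q: "q > 0"
    and a: "[:q:] = FB B1 * x + FB B2 * y" and b: "FB B2 = FB B1 * a0 + smult q b0"
    and i1: "idx B1 > 0" and i2: "idx B2 > 0"
  shows "idx (B1 \<union> B2) = idx B1 * idx B2 * nat q ^ degree (FB B1)"
proof -
  have c1: "card (cset (SS B1 B2) ` TT (B1 \<union> B2)) = idx B1 * idx B2" by (rule prod_part[OF disj])
  have c2: "card (cset (RR (B1 \<union> B2)) ` SS B1 B2) = nat q ^ degree (FB B1)"
    by (rule quot_part[OF fin pos disj q a b])
  have RS: "RR (B1 \<union> B2) \<subseteq> SS B1 B2"
  proof
    fix f assume "f \<in> RR (B1 \<union> B2)"
    then obtain g where g: "f = evB (B1 \<union> B2) g" unfolding RR_def by blast
    have "evB (B1 \<union> B2) g = evB B1 g + evB B2 g"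
      using disj unfolding evB_def by (auto simp: fun_eq_iff)
    then show "f \<in> SS B1 B2" unfolding SS_def RR_def g by blast
  qed
  have ST: "SS B1 B2 \<subseteq> TT (B1 \<union> B2)"
  proof
    fix f assume "f \<in> SS B1 B2"
    then obtain x y where xy: "f = x + y" "x \<in> RR B1" "y \<in> RR B2" unfolding SS_def by blast
    have "x \<in> TT B1" "y \<in> TT B2" using xy RR_sub_TT by blast+
    then show "f \<in> TT (B1 \<union> B2)" unfolding TT_split[OF disj] using xy by force
  qed
  have f1: "finite (cset (SS B1 B2) ` TT (B1 \<union> B2))" using c1 i1 i2 by (metis card_ge_0_finite mult_pos_pos)
  have f2: "finite (cset (RR (B1 \<union> B2)) ` SS B1 B2)" using c2 q
    by (metis card_ge_0_finite nat_0_less_mult_iff zero_less_nat_eq zero_less_power)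
  have "idx (B1 \<union> B2) = card (cset (SS B1 B2) ` TT (B1 \<union> B2)) * card (cset (RR (B1 \<union> B2)) ` SS B1 B2)"
    unfolding idx_def by (rule card_tower[OF subgrp_TT subgrp_SS subgrp_RR RS ST f1 f2])
  then show ?thesis using c1 c2 by simp
qed

definition Bk :: "nat \<Rightarrow> nat \<Rightarrow> nat set" where
  "Bk k n = (\<lambda>e. k * e) ` {e. e dvd n}"

lemma Bk_finite: "n > 0 \<Longrightarrow> finite (Bk k n)"
  unfolding Bk_def by simp

lemma Bk_pos: "k > 0 \<Longrightarrow> n > 0 \<Longrightarrow> \<forall>d\<in>Bk k n. d > 0"
  unfolding Bk_def by (auto intro: Nat.gr0I)

lemma Bk_one: "Bk k 1 = {k}"
  unfolding Bk_def by auto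

lemma sum_totient_Bk:
  assumes k: "k > 0" and n: "n > 0" and cop: "coprime k n"
  shows "(\<Sum>d\<in>Bk k n. totient d) = totient k * n"
proof -
  have inj: "inj_on (\<lambda>e. k * e) {e. e dvd n}" using k by (auto intro: inj_onI)
  have "(\<Sum>d\<in>Bk k n. totient d) = (\<Sum>e | e dvd n. totient (k * e))"
    unfolding Bk_def by (simp add: sum.reindex[OF inj])
  also have "\<dots> = (\<Sum>e | e dvd n. totient k * totient e)"
  proof (rule sum.cong[OF refl])
    fix e assume "e \<in> {e. e dvd n}"
    then have "coprime k e" using cop by (auto intro: coprime_imp_coprime dest: dvd_trans)
    then show "totient (k * e) = totient k * totient e" by (rule totient_mult_coprime)
  qed
  also have "\<dots> = totient k * n" by (simp add: sum_distrib_left[symmetric] totient_divisor_sum)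
  finally show ?thesis .
qed

lemma FB_Bk_degree:
  assumes "k > 0" "n > 0" "coprime k n"
  shows "degree (FB (Bk k n)) = totient k * n"
  using FB_degree[OF Bk_finite Bk_pos] sum_totient_Bk assms by simp

lemma geom_id:
  fixes Y :: "'a::comm_ring_1"
  shows "\<exists>V. (\<Sum>j<q. Y ^ j) = of_nat q + (Y - 1) * V"
proof (induction q)
  case 0
  then show ?case by (intro exI[of _ 0]) simp
next
  case (Suc q)
  then obtain V where V: "(\<Sum>j<q. Y ^ j) = of_nat q + (Y - 1) * V" by blast
  define S where "S = (\<Sum>j<q. Y ^ j)"
  have V': "S = of_nat q + (Y - 1) * V" using V unfolding S_def .
  have "Y ^ q = (Y ^ q - 1) + 1" by simp
  also have "\<dots> = (Y - 1) * S + 1" unfolding S_def power_diff_1_eq ..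
  finally have T: "Y ^ q = (Y - 1) * S + 1" .
  have "(\<Sum>j<Suc q. Y ^ j) = S + Y ^ q" unfolding S_def by simp
  also have "\<dots> = of_nat (Suc q) + (Y - 1) * (V + S)" unfolding T V' by (simp add: algebra_simps)
  finally show ?case by blast
qed

lemma monic_dvd_eq:
  fixes A C :: "int poly"
  assumes "lead_coeff A = 1" "lead_coeff C = 1" "A dvd C" "degree A = degree C"
  shows "A = C"
proof -
  obtain c where c: "C = A * c" using assms(3) by (rule dvdE)
  have C0: "C \<noteq> 0" using assms(2) by auto
  then have A0: "A \<noteq> 0" and c0: "c \<noteq> 0" using c by auto
  have "degree C = degree A + degree c" using c A0 c0 by (simp add: degree_mult_eq)
  then have "degree c = 0" using assms(4) by simp
  then have cc: "c = [:coeff c 0:]" using degree_0_id[of c] by simp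
  have "lead_coeff C = lead_coeff A * lead_coeff c" unfolding c by (rule lead_coeff_mult)
  then have "lead_coeff c = 1" using assms by simp
  then have "coeff c 0 = 1" using \<open>degree c = 0\<close> by simp
  then have "c = 1" using cc by (simp add: one_pCons)
  then show ?thesis using c by simp
qed

lemma coprime_dvd_right:
  fixes a b c :: nat
  assumes "coprime a b" "c dvd b"
  shows "coprime a c"
proof -
  obtain d where "b = c * d" using assms(2) by (rule dvdE)
  then show ?thesis using assms(1) by simp
qed

locale splitctx =
  fixes k n q :: nat
  assumes k: "k > 0" and n: "n > 0" and cop: "coprime k n" and q: "prime q" and qn: "q dvd n"
begin

definition b where "b = multiplicity q n"
definition n2 where "n2 = n div q ^ b"

lemma q2: "q \<ge> 2" using q by (rule prime_ge_2_nat)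

lemma b1: "b \<ge> 1"
proof -
  have "multiplicity q n \<noteq> 0" using qn n q prime_elem_multiplicity_eq_zero_iff[of q n] by simp
  then show ?thesis unfolding b_def by simp
qed

lemma qb: "q ^ b = q ^ (b - 1) * q"
proof -
  obtain c where c: "b = Suc c" using b1 by (cases b) auto
  then show ?thesis by simp
qed

lemma n_eq: "n = q ^ b * n2"
  unfolding n2_def b_def by (simp add: multiplicity_dvd)

lemma n2_pos: "n2 > 0" using n n_eq by (cases "n2 = 0") auto

lemma q_not_n2: "\<not> q dvd n2"
proof -
  have "\<not> is_unit q" using q2 by simp
  then show ?thesis unfolding n2_def b_def using multiplicity_decompose[of n q] n by simp
qed

lemma q_not_k: "\<not> q dvd k"
proof
  assume qk: "q dvd k"
  have g: "gcd k n = 1" using cop by (simp add: coprime_iff_gcd_eq_1)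
  have "q dvd gcd k n" using qk qn by (rule gcd_greatest)
  then have "q dvd 1" using g by simp
  then show False using q by simp
qed

lemma nq_dvd: "n div q dvd n"
proof -
  obtain t where t: "n = q * t" using qn by (rule dvdE)
  have "n div q = t" using q2 by (subst t) simp
  then show ?thesis using t by simp
qed

lemma nq_eq: "n div q = q ^ (b - 1) * n2"
proof -
  have "q ^ b = q * q ^ (b - 1)" using qb by simp
  then have e: "n = q * (q ^ (b - 1) * n2)" using n_eq by simp
  have "q > 0" using q2 by simp
  then show ?thesis by (subst e) simp
qed

lemma nq_pos: "n div q > 0" using nq_eq n2_pos q2 by simp

lemma nq_lt: "n div q < n" using n q2 by simp

lemma n2_lt: "n2 < n"
proof -
  have "q ^ b = q ^ (b - 1) * q" by (rule qb)
  moreover have "q ^ (b - 1) \<ge> 1" using q2 by simp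
  ultimately have "q ^ b \<ge> q" by simp
  then have "q ^ b > 1" using q2 by simp
  then have lt: "n2 < q ^ b * n2" using n2_pos by simp
  have eq: "q ^ b * n2 = n" using n_eq by (rule sym)
  show ?thesis using lt eq by (rule ord_less_eq_trans)
qed

lemma dvd_nq: assumes "e dvd n" "\<not> q ^ b dvd e" shows "e dvd n div q"
proof -
  obtain t where t: "n = e * t" using assms(1) by (rule dvdE)
  have qbn: "q ^ b dvd n" unfolding b_def by (rule multiplicity_dvd)
  have "q dvd t"
  proof (rule ccontr)
    assume "\<not> q dvd t"
    then have "coprime (q ^ b) t" using q by (simp add: prime_imp_coprime coprime_power_left_iff)
    moreover have "q ^ b dvd e * t" unfolding t[symmetric] by (rule qbn)
    ultimately have "q ^ b dvd e" by (simp add: coprime_dvd_mult_left_iff)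
    then show False using assms(2) by simp
  qed
  then obtain s where "t = q * s" by (rule dvdE)
  then have "n div q = e * s" using t q2 by simp
  then show ?thesis by simp
qed

lemma split_sets: "Bk k n = Bk k (n div q) \<union> Bk (k * q ^ b) n2"
proof
  show "Bk k n \<subseteq> Bk k (n div q) \<union> Bk (k * q ^ b) n2"
  proof
    fix d assume "d \<in> Bk k n"
    then obtain e where e: "d = k * e" "e dvd n" unfolding Bk_def by blast
    show "d \<in> Bk k (n div q) \<union> Bk (k * q ^ b) n2"
    proof (cases "q ^ b dvd e")
      case True
      then obtain e2 where e2: "e = q ^ b * e2" by (rule dvdE)
      have "q ^ b * e2 dvd q ^ b * n2" using e(2) e2 n_eq by simp
      then have "e2 dvd n2" using q2 by simp
      moreover have "d = k * q ^ b * e2" using e e2 by simp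
      ultimately show ?thesis unfolding Bk_def by blast
    next
      case False
      then have "e dvd n div q" using dvd_nq e by blast
      then show ?thesis using e unfolding Bk_def by blast
    qed
  qed
next
  show "Bk k (n div q) \<union> Bk (k * q ^ b) n2 \<subseteq> Bk k n"
  proof
    fix d assume "d \<in> Bk k (n div q) \<union> Bk (k * q ^ b) n2"
    then show "d \<in> Bk k n"
    proof
      assume "d \<in> Bk k (n div q)"
      then obtain e where e: "d = k * e" "e dvd n div q" unfolding Bk_def by blast
      have "e dvd n" using e(2) nq_dvd by (rule dvd_trans)
      then show ?thesis using e unfolding Bk_def by blast
    next
      assume "d \<in> Bk (k * q ^ b) n2"
      then obtain e where e: "d = k * q ^ b * e" "e dvd n2" unfolding Bk_def by blast
      have "q ^ b * e dvd q ^ b * n2" using e(2) by simp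
      moreover have "q ^ b * n2 = n" using n_eq by (rule sym)
      ultimately have "q ^ b * e dvd n" by simp
      moreover have "d = k * (q ^ b * e)" using e by simp
      ultimately show ?thesis unfolding Bk_def by blast
    qed
  qed
qed

lemma split_disj: "Bk k (n div q) \<inter> Bk (k * q ^ b) n2 = {}"
proof (rule ccontr)
  assume "Bk k (n div q) \<inter> Bk (k * q ^ b) n2 \<noteq> {}"
  then obtain e e2 where e: "e dvd n div q" "e2 dvd n2" "k * e = k * q ^ b * e2"
    unfolding Bk_def by blast
  then have "e = q ^ b * e2" using k by simp
  then have "q ^ b dvd e" by simp
  then have "q ^ b dvd n div q" using e(1) by (rule dvd_trans)
  then have "q ^ (b - 1) * q dvd q ^ (b - 1) * n2" unfolding nq_eq[symmetric] qb[symmetric] .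
  then have "q dvd n2" using q2 by simp
  then show False using q_not_n2 by simp
qed

lemma cop1: "coprime k (n div q)"
  using cop nq_dvd by (rule coprime_dvd_right)

end

lemma ev_sum: "ev z (\<Sum>i\<in>A. f i) = (\<Sum>i\<in>A. ev z (f i))"
  by (induction A rule: infinite_finite_induct) auto

context splitctx
begin

abbreviation "B1 \<equiv> Bk k (n div q)"
abbreviation "B2 \<equiv> Bk (k * q ^ b) n2"

lemma q0: "q > 0" using q2 by simp

lemma B1_fin: "finite B1" using Bk_finite nq_pos by blast
lemma B1_pos: "\<forall>d\<in>B1. d > 0" using Bk_pos k nq_pos by blast
lemma B2_fin: "finite B2" using Bk_finite n2_pos by blast
lemma B2_pos: "\<forall>d\<in>B2. d > 0" using Bk_pos[of "k * q ^ b" n2] k q0 n2_pos by simp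
lemma B_fin: "finite (Bk k n)" using Bk_finite n by blast
lemma B_pos: "\<forall>d\<in>Bk k n. d > 0" using Bk_pos k n by blast

lemma cond_a: "\<exists>x y. [:int q:] = FB B1 * x + FB B2 * y"
proof -
  define N where "N = k * (n div q)"
  have N0: "N > 0" unfolding N_def using k nq_pos by simp
  have d1: "FB B1 dvd Xp N"
  proof -
    have "\<forall>d\<in>B1. ev (zeta d) (Xp N) = 0"
    proof
      fix d assume d: "d \<in> B1"
      then obtain e where e: "d = k * e" "e dvd n div q" unfolding Bk_def by blast
      have "d dvd N" unfolding N_def e(1) using e(2) by (rule mult_dvd_mono[OF dvd_refl])
      then have "zeta d ^ N = 1" using zeta_pow_eq_1 B1_pos d by blast
      then show "ev (zeta d) (Xp N) = 0" by simp
    qed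
    then show ?thesis by (simp only: FB_dvd_iff[OF B1_fin B1_pos])
  qed
  define Y where "Y = (monom 1 N :: int poly)"
  define S where "S = (\<Sum>j<q. Y ^ j)"
  have d2: "FB B2 dvd S"
  proof -
    have "\<forall>d\<in>B2. ev (zeta d) S = 0"
    proof
      fix d assume d: "d \<in> B2"
      then obtain e2 where e2: "d = k * q ^ b * e2" "e2 dvd n2" unfolding Bk_def by blast
      have d0: "d > 0" using d B2_pos by blast
      define w where "w = zeta d ^ N"
      have evS: "ev (zeta d) S = (\<Sum>j<q. w ^ j)"
        unfolding S_def Y_def w_def by (simp add: ev_sum power_mult[symmetric] mult.commute)
      have "d dvd N * q"
      proof -
        have "N * q = k * n" unfolding N_def using qn by simp
        also have "\<dots> = k * q ^ b * n2" using n_eq by simp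
        finally have "N * q = k * q ^ b * n2" .
        then show ?thesis unfolding e2(1) using e2(2) by (simp add: mult_dvd_mono)
      qed
      then have wq: "w ^ q = 1" unfolding w_def power_mult[symmetric] using zeta_pow_eq_1[OF d0] by simp
      have "\<not> d dvd N"
      proof
        assume "d dvd N"
        then have "k * (q ^ b * e2) dvd k * (q ^ (b - 1) * n2)" unfolding N_def nq_eq e2(1) by (simp add: mult.assoc)
        then have "q ^ b * e2 dvd q ^ (b - 1) * n2" using k by simp
        then have "q ^ b dvd q ^ (b - 1) * n2" by (rule dvd_mult_left)
        then have "q ^ (b - 1) * q dvd q ^ (b - 1) * n2" unfolding qb .
        then have "q dvd n2" using q0 by simp
        then show False using q_not_n2 by simp
      qed
      then have "w \<noteq> 1" unfolding w_def using zeta_pow_eq_1[OF d0] by simp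
      then have "(\<Sum>j<q. w ^ j) = (1 - w ^ q) / (1 - w)" by (simp add: sum_gp_strict)
      then show "ev (zeta d) S = 0" using evS wq by simp
    qed
    then show ?thesis by (simp only: FB_dvd_iff[OF B2_fin B2_pos])
  qed
  obtain V where V: "S = of_nat q + (Y - 1) * V" unfolding S_def using geom_id by blast
  have XY: "Y - 1 = Xp N" unfolding Y_def Xp_def by simp
  obtain c1 where c1: "Xp N = FB B1 * c1" using d1 by (rule dvdE)
  obtain c2 where c2: "S = FB B2 * c2" using d2 by (rule dvdE)
  have "[:int q:] = S - (Y - 1) * V" using V by (simp add: of_nat_poly)
  also have "\<dots> = FB B1 * (- c1 * V) + FB B2 * c2" unfolding XY c1 c2 by (simp add: algebra_simps)
  finally show ?thesis by blast
qed

lemma FB_pcompose: "FB (Bk k n) = pcompose (FB B1) (monom 1 q)"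
proof -
  define G where "G = pcompose (FB B1) (monom 1 q)"
  have dv: "FB (Bk k n) dvd G"
  proof -
    have "\<forall>d\<in>Bk k n. ev (zeta d) G = 0"
    proof
      fix d assume d: "d \<in> Bk k n"
      then obtain e where e: "d = k * e" "e dvd n" unfolding Bk_def by blast
      have d0: "d > 0" using d B_pos by blast
      have evG: "ev (zeta d) G = ev (zeta d ^ q) (FB B1)" unfolding G_def by (simp add: ev_pcompose)
      have allB1: "\<forall>d\<in>B1. ev (zeta d) (FB B1) = 0" using FB_dvd_iff[OF B1_fin B1_pos, of "FB B1"] by simp
      show "ev (zeta d) G = 0"
      proof (cases "q dvd e")
        case True
        then obtain e1 where e1: "e = q * e1" by (rule dvdE)
        obtain t where t: "n = e * t" using e(2) by (rule dvdE)
        have "n div q = e1 * t" using q0 unfolding t e1 by simp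
        then have "e1 dvd n div q" by simp
        then have kB: "k * e1 \<in> B1" unfolding Bk_def by blast
        have "k * e1 > 0" using kB B1_pos by blast
        then have "zeta (q * (k * e1)) ^ q = zeta (k * e1)" using q0 by (intro zeta_mult_pow) auto
        moreover have "d = q * (k * e1)" using e e1 by simp
        ultimately have "zeta d ^ q = zeta (k * e1)" by simp
        then show ?thesis using evG allB1 kB by simp
      next
        case False
        have "\<not> q ^ b dvd e"
        proof
          assume qbe: "q ^ b dvd e"
          have "q dvd q ^ b" using b1 by (simp add: dvd_power)
          then have "q dvd e" using qbe by (rule dvd_trans)
          then show False using False by simp
        qed
        then have "e dvd n div q" using dvd_nq e(2) by blast
        then have dB: "d \<in> B1" using e(1) unfolding Bk_def by blast
        have "\<not> q dvd d"
        proof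
          assume "q dvd d"
          then have "q dvd k * e" using e(1) by simp
          then have "q dvd k \<or> q dvd e" using q by (simp add: prime_dvd_mult_iff)
          then show False using False q_not_k by blast
        qed
        then have "coprime q d" using q by (simp add: prime_imp_coprime)
        then have "ev (zeta d ^ q) (cyc d) = 0" by (rule cyc_root_coprime[OF d0])
        moreover have "cyc d dvd FB B1" unfolding FB_def using B1_fin dB by (rule dvd_prodI)
        ultimately have "ev (zeta d ^ q) (FB B1) = 0" using ev_dvd by blast
        then show ?thesis using evG by simp
      qed
    qed
    then show ?thesis by (simp only: FB_dvd_iff[OF B_fin B_pos])
  qed
  have degB: "degree (FB (Bk k n)) = totient k * n" by (rule FB_Bk_degree[OF k n cop])
  have degG: "degree G = totient k * n"
  proof -
    have "degree G = degree (FB B1) * degree (monom (1::int) q)" unfolding G_def by (rule degree_pcompose)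
    also have "\<dots> = totient k * (n div q) * q" using FB_Bk_degree[OF k nq_pos cop1] by (simp add: degree_monom_eq)
    also have "\<dots> = totient k * n" using qn by simp
    finally show ?thesis .
  qed
  have lcG: "lead_coeff G = 1"
  proof -
    have "degree (monom (1::int) q) > 0" using q0 by (simp add: degree_monom_eq)
    then have "lead_coeff G = lead_coeff (FB B1) * lead_coeff (monom (1::int) q) ^ degree (FB B1)"
      unfolding G_def by (rule lead_coeff_comp)
    then show ?thesis using FB_monic[OF B1_fin B1_pos] by (simp add: degree_monom_eq)
  qed
  have "FB (Bk k n) = G"
    by (rule monic_dvd_eq[OF FB_monic[OF B_fin B_pos] lcG dv]) (simp add: degB degG)
  then show ?thesis unfolding G_def .
qed

lemma FB_split: "FB (Bk k n) = FB B1 * FB B2"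
proof -
  have "FB (Bk k n) = (\<Prod>d\<in>B1 \<union> B2. cyc d)" unfolding FB_def using split_sets by simp
  also have "\<dots> = FB B1 * FB B2" unfolding FB_def
    by (rule prod.union_disjoint[OF B1_fin B2_fin split_disj])
  finally show ?thesis .
qed

lemma cond_b: "\<exists>a0 b0. FB B2 = FB B1 * a0 + smult (int q) b0"
proof -
  obtain r where r: "FB B1 ^ q = pcompose (FB B1) (monom 1 q) + smult (int q) r" using frob[OF q] by blast
  have qs: "q = Suc (q - 1)" using q0 by simp
  have e1: "FB B1 ^ q = FB B1 * FB B1 ^ (q - 1)" by (subst qs) (simp only: power_Suc diff_Suc_1)
  have pc: "pcompose (FB B1) (monom 1 q) = FB B1 * FB B2" using FB_pcompose FB_split by simp
  have h1: "FB B1 ^ q = FB B1 * FB B2 + smult (int q) r" using r unfolding pc .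
  have "FB B1 * (FB B1 ^ (q - 1) - FB B2) = FB B1 * FB B1 ^ (q - 1) - FB B1 * FB B2"
    by (simp only: right_diff_distrib)
  also have "\<dots> = FB B1 ^ q - FB B1 * FB B2" unfolding e1 ..
  also have "\<dots> = smult (int q) r" unfolding h1 by simp
  finally have h2: "FB B1 * (FB B1 ^ (q - 1) - FB B2) = smult (int q) r" .
  have "\<forall>i\<ge>degree (FB B1). int q dvd coeff (FB B1 * (FB B1 ^ (q - 1) - FB B2)) i"
    unfolding h2 by simp
  then have "\<forall>i. int q dvd coeff (FB B1 ^ (q - 1) - FB B2) i"
    by (rule monic_mult_modq[OF FB_monic[OF B1_fin B1_pos]])
  then obtain v where v: "FB B1 ^ (q - 1) - FB B2 = smult (int q) v" using smult_of_dvd_coeffs by blast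
  have qs2: "q - 1 = Suc (q - 2)" using q2 by simp
  have e2: "FB B1 ^ (q - 1) = FB B1 * FB B1 ^ (q - 2)" by (subst qs2) (simp only: power_Suc)
  have "FB B2 = FB B1 ^ (q - 1) - (FB B1 ^ (q - 1) - FB B2)" by simp
  also have "\<dots> = FB B1 ^ (q - 1) - smult (int q) v" unfolding v ..
  also have "\<dots> = FB B1 * FB B1 ^ (q - 2) + smult (int q) (- v)" unfolding e2 by simp
  finally show ?thesis by blast
qed

lemma idx_step:
  assumes i1: "idx B1 > 0" and i2: "idx B2 > 0"
  shows "idx (Bk k n) = idx B1 * idx B2 * q ^ (totient k * (n div q))"
proof -
  obtain x y where a: "[:int q:] = FB B1 * x + FB B2 * y" using cond_a by blast
  obtain a0 b0 where bb: "FB B2 = FB B1 * a0 + smult (int q) b0" using cond_b by blast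
  have pos: "\<forall>d\<in>B1 \<union> B2. d > 0" using B1_pos B2_pos by blast
  have "idx (B1 \<union> B2) = idx B1 * idx B2 * nat (int q) ^ degree (FB B1)"
    by (rule split_idx[OF B1_fin B2_fin pos split_disj _ a bb i1 i2]) (simp add: q0)
  moreover have "degree (FB B1) = totient k * (n div q)" by (rule FB_Bk_degree[OF k nq_pos cop1])
  ultimately show ?thesis using split_sets by simp
qed

end

definition E :: "nat \<Rightarrow> nat" where
  "E m = (\<Prod>p\<in>prime_factors m. p ^ (((p_part p m - 1) div (p - 1)) * (m div p_part p m)))"

lemma E_pos: "E m > 0"
  unfolding E_def by (intro prod_pos) (auto intro: prime_gt_0_nat simp: in_prime_factors_iff)

lemma E_1: "E 1 = 1"
  unfolding E_def by simp

lemma geo_nat: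
  assumes "q \<ge> (1::nat)"
  shows "(q - 1) * (\<Sum>i<c. q ^ i) + 1 = q ^ c"
proof -
  obtain r where r: "q = Suc r" using assms by (cases q) auto
  show ?thesis unfolding r
  proof (induction c)
    case 0 then show ?case by simp
  next
    case (Suc c)
    have "(Suc r - 1) * (\<Sum>i<Suc c. Suc r ^ i) + 1 = (r * (\<Sum>i<c. Suc r ^ i) + 1) + r * Suc r ^ c"
      by (simp add: algebra_simps)
    also have "\<dots> = Suc r ^ c + r * Suc r ^ c" using Suc by simp
    also have "\<dots> = Suc r ^ Suc c" by simp
    finally show ?case .
  qed
qed

lemma geo_div:
  assumes "q \<ge> (2::nat)"
  shows "(q ^ c - 1) div (q - 1) = (\<Sum>i<c. q ^ i)"
proof -
  have "q ^ c - 1 = (q - 1) * (\<Sum>i<c. q ^ i)" using geo_nat[of q c] assms by simp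
  then show ?thesis using assms by simp
qed

lemma Ekey:
  assumes q: "prime q" and m: "m > 0" and qm: "\<not> q dvd m"
  shows "E (q ^ c * m) = q ^ ((\<Sum>i<c. q ^ i) * m) * E m ^ (q ^ c)"
proof (cases "c = 0")
  case True
  then show ?thesis by simp
next
  case False
  define n where "n = q ^ c * m"
  have q2: "q \<ge> 2" using q by (rule prime_ge_2_nat)
  have qc0: "q ^ c \<noteq> 0" using q2 by simp
  have pf: "prime_factors n = insert q (prime_factors m)"
  proof -
    have "prime_factors n = prime_factors (q ^ c) \<union> prime_factors m"
      unfolding n_def using qc0 m by (intro prime_factors_product) auto
    also have "prime_factors (q ^ c) = {q}" using False q by (simp add: prime_factors_power prime_prime_factors)
    finally show ?thesis by simp
  qed
  have qnot: "q \<notin> prime_factors m" using qm by (auto simp: in_prime_factors_iff)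
  have multq: "multiplicity q n = c"
  proof -
    have "multiplicity q n = multiplicity q (q ^ c) + multiplicity q m"
      unfolding n_def using q qc0 m by (intro prime_elem_multiplicity_mult_distrib) auto
    moreover have "multiplicity q (q ^ c) = c" using q by (simp add: multiplicity_prime_power)
    moreover have "multiplicity q m = 0" using qm by (rule not_dvd_imp_multiplicity_0)
    ultimately show ?thesis by simp
  qed
  have fq: "q ^ (((p_part q n - 1) div (q - 1)) * (n div p_part q n)) = q ^ ((\<Sum>i<c. q ^ i) * m)"
  proof -
    have "p_part q n = q ^ c" unfolding p_part_def multq ..
    then show ?thesis using geo_div[OF q2, of c] qc0 unfolding n_def by simp
  qed
  have fp: "p ^ (((p_part p n - 1) div (p - 1)) * (n div p_part p n))
          = (p ^ (((p_part p m - 1) div (p - 1)) * (m div p_part p m))) ^ (q ^ c)"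
    if p: "p \<in> prime_factors m" for p
  proof -
    have pp: "prime p" using p by (auto simp: in_prime_factors_iff)
    have pq: "p \<noteq> q" using p qnot by blast
    have "multiplicity p n = multiplicity p (q ^ c) + multiplicity p m"
      unfolding n_def using pp qc0 m by (intro prime_elem_multiplicity_mult_distrib) auto
    moreover have "multiplicity p (q ^ c) = 0" using pp q pq by (rule multiplicity_distinct_prime_power)
    ultimately have "multiplicity p n = multiplicity p m" by simp
    then have ppe: "p_part p n = p_part p m" unfolding p_part_def by simp
    have "p_part p m dvd m" unfolding p_part_def by (rule multiplicity_dvd)
    then have "n div p_part p m = q ^ c * (m div p_part p m)" unfolding n_def
      by (simp add: div_mult_swap)
    then show ?thesis unfolding ppe by (simp add: power_mult[symmetric] ac_simps)
  qed
  have "E n = q ^ (((p_part q n - 1) div (q - 1)) * (n div p_part q n)) *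
       (\<Prod>p\<in>prime_factors m. p ^ (((p_part p n - 1) div (p - 1)) * (n div p_part p n)))"
    unfolding E_def pf using qnot by (simp add: prod.insert)
  also have "\<dots> = q ^ ((\<Sum>i<c. q ^ i) * m) *
       (\<Prod>p\<in>prime_factors m. (p ^ (((p_part p m - 1) div (p - 1)) * (m div p_part p m))) ^ (q ^ c))"
    unfolding fq using fp by simp
  also have "\<dots> = q ^ ((\<Sum>i<c. q ^ i) * m) * E m ^ (q ^ c)"
    unfolding E_def by (simp add: prod_power_distrib)
  finally show ?thesis unfolding n_def .
qed

context splitctx
begin

lemma Erec: "E n = q ^ (n div q) * E (n div q) * E n2 ^ totient (q ^ b)"
proof -
  obtain c where c: "b = Suc c" using b1 by (cases b) auto
  have qn2: "\<not> q dvd n2" by (rule q_not_n2)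
  have e1: "E n = q ^ ((\<Sum>i<Suc c. q ^ i) * n2) * E n2 ^ (q ^ Suc c)"
    using Ekey[OF q n2_pos qn2, of "Suc c"] n_eq c by simp
  have nq: "n div q = q ^ c * n2" using nq_eq c by simp
  have e2: "E (n div q) = q ^ ((\<Sum>i<c. q ^ i) * n2) * E n2 ^ (q ^ c)"
    unfolding nq by (rule Ekey[OF q n2_pos qn2])
  have t: "totient (q ^ b) = q ^ c * (q - 1)" using c totient_prime_power_Suc[OF q] by simp
  have "q ^ (n div q) * E (n div q) * E n2 ^ totient (q ^ b)
      = q ^ (q ^ c * n2) * q ^ ((\<Sum>i<c. q ^ i) * n2) * (E n2 ^ (q ^ c) * E n2 ^ (q ^ c * (q - 1)))"
    unfolding e2 t by (simp only: nq)
  also have "\<dots> = q ^ (q ^ c * n2 + (\<Sum>i<c. q ^ i) * n2) * E n2 ^ (q ^ c + q ^ c * (q - 1))"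
    by (simp add: power_add)
  also have "q ^ c * n2 + (\<Sum>i<c. q ^ i) * n2 = (\<Sum>i<Suc c. q ^ i) * n2"
    by (simp add: algebra_simps)
  also have "q ^ c + q ^ c * (q - 1) = q ^ Suc c"
  proof -
    have "q ^ c + q ^ c * (q - 1) = q ^ c * (1 + (q - 1))" by (simp add: algebra_simps)
    also have "1 + (q - 1) = q" using q2 by simp
    finally show ?thesis by (simp add: mult.commute)
  qed
  finally show ?thesis using e1 by simp
qed

end

lemma idx_formula:
  assumes "n > 0"
  shows "\<forall>k. k > 0 \<longrightarrow> coprime k n \<longrightarrow> idx (Bk k n) = E n ^ totient k"
  using assms
proof (induction n rule: less_induct)
  case (less n)
  show ?case
  proof (intro allI impI)
    fix k :: nat assume k: "k > 0" and cop: "coprime k n"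
    show "idx (Bk k n) = E n ^ totient k"
    proof (cases "n = 1")
      case True
      have "Bk k n = {k}" unfolding True by (rule Bk_one)
      then show ?thesis using idx_single[OF k] E_1 True by simp
    next
      case False
      then obtain q where q: "prime q" "q dvd n" using prime_factor_nat by blast
      interpret S: splitctx k n q using k less.prems cop q by unfold_locales auto
      have IH1: "idx (Bk k (n div q)) = E (n div q) ^ totient k"
        using less.IH[OF S.nq_lt S.nq_pos] k S.cop1 by blast
      have cop2: "coprime (k * q ^ S.b) S.n2"
      proof -
        have "coprime k S.n2" using cop S.n_eq by (metis coprime_mult_right_iff)
        moreover have "coprime q S.n2" using q(1) S.q_not_n2 by (simp add: prime_imp_coprime)
        ultimately show ?thesis by simp
      qed
      have kq0: "k * q ^ S.b > 0" using k S.q0 by simp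
      have IH2: "idx (Bk (k * q ^ S.b) S.n2) = E S.n2 ^ totient (k * q ^ S.b)"
        using less.IH[OF S.n2_lt S.n2_pos] kq0 cop2 by blast
      have i1: "idx (Bk k (n div q)) > 0" using IH1 E_pos by simp
      have i2: "idx (Bk (k * q ^ S.b) S.n2) > 0" using IH2 E_pos by simp
      have copkq: "coprime k (q ^ S.b)"
      proof -
        have "coprime q k" using q(1) S.q_not_k by (simp add: prime_imp_coprime)
        then show ?thesis by (simp add: coprime_commute)
      qed
      have tot: "totient (k * q ^ S.b) = totient k * totient (q ^ S.b)"
        by (rule totient_mult_coprime[OF copkq])
      have "idx (Bk k n) = idx (Bk k (n div q)) * idx (Bk (k * q ^ S.b) S.n2) * q ^ (totient k * (n div q))"
        by (rule S.idx_step[OF i1 i2])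
      also have "\<dots> = E (n div q) ^ totient k * (E S.n2 ^ totient (q ^ S.b)) ^ totient k * (q ^ (n div q)) ^ totient k"
        unfolding IH1 IH2 tot by (simp add: power_mult[symmetric] ac_simps)
      also have "\<dots> = (q ^ (n div q) * E (n div q) * E S.n2 ^ totient (q ^ S.b)) ^ totient k"
        by (simp add: power_mult_distrib ac_simps)
      also have "\<dots> = E n ^ totient k" using S.Erec by simp
      finally show ?thesis .
    qed
  qed
qed

lemma Bk_1: "Bk 1 m = {d. d dvd m}"
  unfolding Bk_def by simp

lemma target_eq: "wedderburn_target m = TT {d. d dvd m}"
  unfolding wedderburn_target_def TT_def by auto

lemma image_eq:
  assumes m: "m > 0"
  shows "wedderburn_image m = RR {d. d dvd m}"
proof -
  define D where "D = {d. d dvd m}"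
  have "range (wedderburn_map m) = range (evB D)"
  proof
    show "range (wedderburn_map m) \<subseteq> range (evB D)"
    proof
      fix x assume "x \<in> range (wedderburn_map m)"
      then obtain a where a: "x = wedderburn_map m a" by blast
      have "wedderburn_map m a = evB D (\<Sum>k<m. monom (a k) k)"
        unfolding wedderburn_map_def evB_def D_def by (rule ext) (simp add: ev_sum)
      then show "x \<in> range (evB D)" using a by simp
    qed
  next
    show "range (evB D) \<subseteq> range (wedderburn_map m)"
    proof
      fix x assume "x \<in> range (evB D)"
      then obtain g where g: "x = evB D g" by blast
      have mon: "lead_coeff (Xp m) = 1" by (rule lc_Xp[OF m])
      obtain kk where kk: "g = Xp m * kk + pm (Xp m) g" using pm_props(1)[OF mon] by blast
      define r where "r = pm (Xp m) g"
      have ok: "degok (Xp m) r" unfolding r_def by (rule pm_props(2)[OF mon])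
      have degr: "degree r \<le> m - 1"
        using ok degree_Xp[OF m] unfolding degok_def by auto
      have rsum: "r = (\<Sum>i\<le>m - 1. monom (coeff r i) i)"
        by (rule poly_as_sum_of_monoms'[OF degr, symmetric])
      have set: "{..m - Suc 0} = {..<m}" using m by auto
      have "evB D g = wedderburn_map m (\<lambda>i. coeff r i)"
      proof (rule ext)
        fix d
        show "evB D g d = wedderburn_map m (\<lambda>i. coeff r i) d"
        proof (cases "d dvd m")
          case True
          then have d0: "d > 0" using m by (auto intro: Nat.gr0I)
          have "ev (zeta d) (Xp m) = 0" using True zeta_pow_eq_1[OF d0] by simp
          then have "ev (zeta d) g = ev (zeta d) r" unfolding r_def by (subst kk) simp
          also have "\<dots> = (\<Sum>i<m. of_int (coeff r i) * zeta d ^ i)"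
            by (subst rsum) (simp add: ev_sum set)
          finally show ?thesis using True unfolding evB_def wedderburn_map_def D_def by simp
        next
          case False
          then show ?thesis unfolding evB_def wedderburn_map_def D_def by simp
        qed
      qed
      then show "x \<in> range (wedderburn_map m)" using g by simp
    qed
  qed
  then show ?thesis unfolding wedderburn_image_def RR_def D_def by simp
qed

lemma cos_eq: "(\<lambda>x. (\<lambda>y. \<lambda>d. x d + y d) ` I) = cset I"
  unfolding cset_def by (rule ext) (simp add: plus_fun_def)

theorem corollary5p8:
  fixes m :: nat
  assumes "m \<ge> 1"
  shows "wedderburn_index m =
    (\<Prod>p\<in>prime_factors m. p ^ (((p_part p m - 1) div (p - 1)) * (m div p_part p m)))"
proof -
  have m: "m > 0" using assms by simp
  have "wedderburn_index m = idx (Bk 1 m)"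
    unfolding wedderburn_index_def idx_def Bk_1 target_eq image_eq[OF m] cos_eq ..
  also have "\<dots> = E m ^ totient 1" using idx_formula[OF m] by simp
  also have "\<dots> = E m" by simp
  finally show ?thesis unfolding E_def .
qed

end
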